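(* Let $l,u\in\mathcal{R}(\mathbb{R}^{+},\mathbb{R})$ with $l\leq u$ and $\inf_{s\leq t}(u_s-l_s)>0$ for all $t\geq0$. For $y\in\mathcal{R}(\mathbb{R}^{+},\mathbb{R})$ with $l_0\leq y_0\leq u_0$, let $\Gamma_l(y)$ denote the first component $\xi$ of the solution $(\xi,\kappa)$ of the one-barrier problem $RP_l(y)$, and let $\Gamma^u_l(y)$ denote the first component $x$ of the unique solution $(x,k)$ of $RP^u_l(y)$. Define $\Lambda(f)=f-\Theta^u_l(f)$ for $f\in\mathcal{R}(\mathbb{R}^{+},\mathbb{R})$. Then $\Gamma^u_l=\Lambda\circ\Gamma_l$, i.e. $\Gamma^u_l(y)=\Gamma_l(y)-\Theta^u_l(\Gamma_l(y))$ for every such $y$.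
   Context: A function $f:\mathbb{R}^+=[0,\infty)\to\mathbb{R}$ is regulated if it has a left limit $f_{t^-}$ at every $t>0$ and a right limit $f_{t^+}$ at every $t\geq0$; $\mathcal{R}(\mathbb{R}^{+},\mathbb{R})$ is the set of regulated functions. Write $\Delta^+f_t=f_{t^+}-f_t$, $a\wedge b=\min(a,b)$, $a\vee b=\max(a,b)$, $a^+=a\vee0$. For a function $\phi$ of bounded variation, $\phi^r_t=\phi^c_t+\sum_{0<s\leq t}(\phi_s-\phi_{s^-})$ is its right-continuous part ($\phi^c$ the continuous part). $\Theta^{u}_{l}(f)_t=\sup_{s\leq t}\Big(\big((f_s-u_s)\vee(f_{s^+}-u_{s^+})\big)^+\wedge\inf_{s\leq r\leq t}\big[\big((f_r-l_r)\wedge(f_{r^+}-l_{r^+})\big)\vee(f_r-u_r)\big]\Big)$. One-barrier problem $RP_l(y)$ (for $y_0\geq l_0$): the unique pair $(\xi,\kappa)$ with $\xi=y+\kappa\geq l$, $\kappa$ non-decreasing, right-continuous, $\kappa_0=0$, $\int_{[0,\infty[}(\xi_s-l_s)\wedge(\xi_{s^+}-l_{s^+})\,d\kappa_s=0$. Two-barrier problem $RP^u_l(y)$: $(x,k)$ regulated is a solution if there are $\phi^1,\phi^2$ with (i) $x=y+\phi^1-\phi^2$, $k=\phi^1-\phi^2$; (ii) $l\leq x\leq u$; (iii) $\phi^1,\phi^2$ non-decreasing, $\phi^1_0=\phi^2_0=0$; (iv) $\int_{[0,\infty[}\big((x_s-l_s)\wedge(x_{s^+}-l_{s^+})\big)d\phi^{1,r}_s=\int_{[0,\infty[}\big((u_s-x_s)\wedge(u_{s^+}-x_{s^+})\big)d\phi^{2,r}_s=0$;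 (v) for all $t$, $\sum_{s\leq t}(x_{s^+}-l_{s^+})\Delta^+\phi^1_s=\sum_{s\leq t}(u_s-x_s)\Delta^+\phi^1_s=0$ and $\sum_{s\leq t}(u_{s^+}-x_{s^+})\Delta^+\phi^2_s=\sum_{s\leq t}(x_s-l_s)\Delta^+\phi^2_s=0$. Under the hypotheses on $l,u$, this problem has a unique solution for every $y$ with $l_0\leq y_0\leq u_0$. *)

theory Defs
  imports "HOL-Analysis.Analysis"
begin

text \<open>Functions on R+ = [0,oo) are represented as real => real; only values at t >= 0 matter.\<close>

definition rlim :: "(real \<Rightarrow> real) \<Rightarrow> real \<Rightarrow> real" where
  "rlim f t = Lim (at_right t) f"

definition llim :: "(real \<Rightarrow> real) \<Rightarrow> real \<Rightarrow> real" where
  "llim f t = Lim (at_left t) f"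

definition regulated :: "(real \<Rightarrow> real) \<Rightarrow> bool" where
  "regulated f \<longleftrightarrow> (\<forall>t>0. \<exists>L. (f \<longlongrightarrow> L) (at_left t)) \<and>
                    (\<forall>t\<ge>0. \<exists>L. (f \<longlongrightarrow> L) (at_right t))"

definition Theta :: "(real \<Rightarrow> real) \<Rightarrow> (real \<Rightarrow> real) \<Rightarrow> (real \<Rightarrow> real) \<Rightarrow> real \<Rightarrow> real" where
  "Theta u l f t = (SUP s\<in>{0..t}.
      min (max 0 (max (f s - u s) (rlim f s - rlim u s)))
          (INF r\<in>{s..t}. max (min (f r - l r) (rlim f r - rlim l r)) (f r - u r)))"

definition ljumps :: "(real \<Rightarrow> real) \<Rightarrow> real \<Rightarrow> real" where
  "ljumps \<phi> t = (\<Sum>\<^sub>\<infinity>s\<in>{0<..t}. \<phi> s - llim \<phi> s)"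

definition rjumps :: "(real \<Rightarrow> real) \<Rightarrow> real \<Rightarrow> real" where
  "rjumps \<phi> t = (\<Sum>\<^sub>\<infinity>s\<in>{0..<t}. rlim \<phi> s - \<phi> s)"

definition cpart :: "(real \<Rightarrow> real) \<Rightarrow> real \<Rightarrow> real" where
  "cpart \<phi> t = \<phi> t - \<phi> 0 - ljumps \<phi> t - rjumps \<phi> t"

definition rpart :: "(real \<Rightarrow> real) \<Rightarrow> real \<Rightarrow> real" where
  "rpart \<phi> t = cpart \<phi> t + ljumps \<phi> t"

text \<open>Lebesgue--Stieltjes measure of a non-decreasing right-continuous F on [0,oo) with F 0 = 0,
  extended by 0 to the negative half-line (so no atom at 0); integrals over [0,oo[ are taken
  w.r.t. this measure.\<close>
definition LS :: "(real \<Rightarrow> real) \<Rightarrow> real measure" where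
  "LS F = interval_measure (\<lambda>t. F (max 0 t))"

definition RP1 :: "(real \<Rightarrow> real) \<Rightarrow> (real \<Rightarrow> real) \<Rightarrow> (real \<Rightarrow> real) \<Rightarrow> (real \<Rightarrow> real) \<Rightarrow> bool" where
  "RP1 l y \<xi> \<kappa> \<longleftrightarrow>
     (\<forall>t\<ge>0. \<xi> t = y t + \<kappa> t) \<and> (\<forall>t\<ge>0. \<xi> t \<ge> l t) \<and>
     mono_on {0..} \<kappa> \<and> (\<forall>t\<ge>0. (\<kappa> \<longlongrightarrow> \<kappa> t) (at_right t)) \<and> \<kappa> 0 = 0 \<and>
     (\<integral>\<^sup>+ s\<in>{0..}. ennreal (min (\<xi> s - l s) (rlim \<xi> s - rlim l s)) \<partial>LS \<kappa>) = 0"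

definition RP2 :: "(real \<Rightarrow> real) \<Rightarrow> (real \<Rightarrow> real) \<Rightarrow> (real \<Rightarrow> real) \<Rightarrow> (real \<Rightarrow> real) \<Rightarrow> (real \<Rightarrow> real) \<Rightarrow> bool" where
  "RP2 l u y x k \<longleftrightarrow> regulated x \<and> regulated k \<and>
     (\<exists>\<phi>1 \<phi>2.
        (\<forall>t\<ge>0. x t = y t + \<phi>1 t - \<phi>2 t \<and> k t = \<phi>1 t - \<phi>2 t) \<and>
        (\<forall>t\<ge>0. l t \<le> x t \<and> x t \<le> u t) \<and>
        mono_on {0..} \<phi>1 \<and> mono_on {0..} \<phi>2 \<and> \<phi>1 0 = 0 \<and> \<phi>2 0 = 0 \<and>
        (\<integral>\<^sup>+ s\<in>{0..}. ennreal (min (x s - l s) (rlim x s - rlim l s)) \<partial>LS (rpart \<phi>1)) = 0 \<and>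
        (\<integral>\<^sup>+ s\<in>{0..}. ennreal (min (u s - x s) (rlim u s - rlim x s)) \<partial>LS (rpart \<phi>2)) = 0 \<and>
        (\<forall>t\<ge>0.
           (\<Sum>\<^sub>\<infinity>s\<in>{0..t}. (rlim x s - rlim l s) * (rlim \<phi>1 s - \<phi>1 s)) = 0 \<and>
           (\<Sum>\<^sub>\<infinity>s\<in>{0..t}. (u s - x s) * (rlim \<phi>1 s - \<phi>1 s)) = 0 \<and>
           (\<Sum>\<^sub>\<infinity>s\<in>{0..t}. (rlim u s - rlim x s) * (rlim \<phi>2 s - \<phi>2 s)) = 0 \<and>
           (\<Sum>\<^sub>\<infinity>s\<in>{0..t}. (x s - l s) * (rlim \<phi>2 s - \<phi>2 s)) = 0))"

end

theory Submission
  imports Defs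
begin


lemma rlim_eq: assumes "(f \<longlongrightarrow> L) (at_right t)" shows "rlim f t = L"
  using assms by (simp add: rlim_def tendsto_Lim)

lemma reg_rlim: assumes "regulated f" "t \<ge> 0" shows "(f \<longlongrightarrow> rlim f t) (at_right t)"
proof -
  from assms obtain L where "(f \<longlongrightarrow> L) (at_right t)" unfolding regulated_def by auto
  thus ?thesis using rlim_eq by simp
qed

lemma ev_right: "eventually P (at_right (t::real)) \<longleftrightarrow> (\<exists>d>0. \<forall>r. t < r \<and> r < t + d \<longrightarrow> P r)"
  unfolding eventually_at_right_field
proof
  assume "\<exists>b>t. \<forall>y>t. y < b \<longrightarrow> P y"
  then obtain b where "b > t" "\<forall>y>t. y < b \<longrightarrow> P y" by auto
  thus "\<exists>d>0. \<forall>r. t < r \<and> r < t + d \<longrightarrow> P r" by (intro exI[of _ "b - t"]) auto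
next
  assume "\<exists>d>0. \<forall>r. t < r \<and> r < t + d \<longrightarrow> P r"
  then obtain d where "d > 0" "\<forall>r. t < r \<and> r < t + d \<longrightarrow> P r" by auto
  thus "\<exists>b>t. \<forall>y>t. y < b \<longrightarrow> P y" by (intro exI[of _ "t + d"]) auto
qed

lemma lim_eps:
  fixes f :: "real \<Rightarrow> real"
  assumes "(f \<longlongrightarrow> L) (at_right t)" "e > 0"
  shows "\<exists>d>0. \<forall>r. t < r \<and> r < t + d \<longrightarrow> \<bar>f r - L\<bar> < e"
proof -
  have "eventually (\<lambda>r. dist (f r) L < e) (at_right t)" using assms tendsto_iff by blast
  thus ?thesis unfolding ev_right dist_real_def by auto
qed

lemma lim_lower:
  fixes f :: "real \<Rightarrow> real"
  assumes "(f \<longlongrightarrow> L) (at_right t)" "t < b" "\<And>r. t < r \<Longrightarrow> r < b \<Longrightarrow> c \<le> f r"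
  shows "c \<le> (L::real)"
proof (rule tendsto_lowerbound[OF assms(1)])
  show "eventually (\<lambda>r. c \<le> f r) (at_right t)" unfolding ev_right
    using assms(2,3) by (intro exI[of _ "b - t"]) auto
qed simp

lemma lim_upper:
  fixes f :: "real \<Rightarrow> real"
  assumes "(f \<longlongrightarrow> L) (at_right t)" "t < b" "\<And>r. t < r \<Longrightarrow> r < b \<Longrightarrow> f r \<le> c"
  shows "(L::real) \<le> c"
proof (rule tendsto_upperbound[OF assms(1)])
  show "eventually (\<lambda>r. f r \<le> c) (at_right t)" unfolding ev_right
    using assms(2,3) by (intro exI[of _ "b - t"]) auto
qed simp

lemma lim_cong_right:
  fixes f g :: "real \<Rightarrow> real"
  assumes "(f \<longlongrightarrow> L) (at_right t)" "t \<ge> 0" "\<And>r. r > t \<Longrightarrow> f r = g r"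
  shows "(g \<longlongrightarrow> L) (at_right t)"
proof -
  have "eventually (\<lambda>r. f r = g r) (at_right t)" unfolding ev_right using assms(3)
    by (intro exI[of _ 1]) auto
  thus ?thesis using assms(1) tendsto_cong by fastforce
qed

lemma mono_rlim:
  assumes m: "mono_on {0..} \<phi>" and t: "t \<ge> 0"
  shows "(\<phi> \<longlongrightarrow> rlim \<phi> t) (at_right t)" "\<phi> t \<le> rlim \<phi> t" "\<And>r. t < r \<Longrightarrow> rlim \<phi> t \<le> \<phi> r"
proof -
  have "(\<phi> \<longlongrightarrow> Inf (\<phi> ` ({t<..} \<inter> {0..}))) (at t within ({t<..} \<inter> {0..}))"
    by (rule Lim_right_bound[where K="\<phi> t"]) (use m t in \<open>auto simp: mono_on_def\<close>)
  moreover have "{t<..} \<inter> {0..} = {t<..}" using t by auto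
  ultimately have L: "(\<phi> \<longlongrightarrow> Inf (\<phi> ` ({t<..} \<inter> {0..}))) (at_right t)" by simp
  thus 1: "(\<phi> \<longlongrightarrow> rlim \<phi> t) (at_right t)" using rlim_eq by metis
  show "\<phi> t \<le> rlim \<phi> t"
    by (rule lim_lower[OF 1, of "t+1"]) (use m t in \<open>auto simp: mono_on_def\<close>)
  fix r assume "t < r"
  show "rlim \<phi> t \<le> \<phi> r"
    by (rule lim_upper[OF 1 \<open>t < r\<close>]) (use m t \<open>t < r\<close> in \<open>auto simp: mono_on_def\<close>)
qed

lemma jump_fsum:
  assumes m: "mono_on {0..} \<phi>" and F: "finite F" and a: "0 \<le> a"
  shows "F \<subseteq> {a..<b} \<Longrightarrow> a \<le> b \<Longrightarrow> (\<Sum>s\<in>F. rlim \<phi> s - \<phi> s) \<le> \<phi> b - \<phi> a"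
  using F
proof (induction F arbitrary: b rule: finite_linorder_max_induct)
  case empty
  then show ?case using m a by (auto simp: mono_on_def)
next
  case (insert m' A)
  have mab: "a \<le> m'" "m' < b" using insert by auto
  have "(\<Sum>s\<in>insert m' A. rlim \<phi> s - \<phi> s) = (rlim \<phi> m' - \<phi> m') + (\<Sum>s\<in>A. rlim \<phi> s - \<phi> s)"
    using insert by (subst sum.insert) auto
  also have "(\<Sum>s\<in>A. rlim \<phi> s - \<phi> s) \<le> \<phi> m' - \<phi> a"
    using insert by (intro insert.IH) auto
  also have "rlim \<phi> m' \<le> \<phi> b" using mono_rlim(3)[OF m _ mab(2)] mab a by auto
  finally show ?case by simp
qed

lemma jump_nonneg: "mono_on {0..} \<phi> \<Longrightarrow> s \<ge> 0 \<Longrightarrow> 0 \<le> rlim \<phi> s - \<phi> s"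
  using mono_rlim(2) by fastforce

lemma jump_summable:
  assumes m: "mono_on {0..} \<phi>" and A: "A \<subseteq> {0..<b}"
  shows "(\<lambda>s. rlim \<phi> s - \<phi> s) summable_on A"
proof (rule nonneg_bdd_above_summable_on)
  show "\<And>x. x \<in> A \<Longrightarrow> 0 \<le> rlim \<phi> x - \<phi> x" using A jump_nonneg[OF m] by auto
  show "bdd_above (sum (\<lambda>s. rlim \<phi> s - \<phi> s) ` {F. F \<subseteq> A \<and> finite F})"
  proof (rule bdd_aboveI[of _ "\<bar>\<phi> b - \<phi> 0\<bar>"])
    fix z assume "z \<in> sum (\<lambda>s. rlim \<phi> s - \<phi> s) ` {F. F \<subseteq> A \<and> finite F}"
    then obtain F where "F \<subseteq> A" "finite F" "z = (\<Sum>s\<in>F. rlim \<phi> s - \<phi> s)" by auto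
    moreover have "0 \<le> b" if "A \<noteq> {}" using A that by auto
    ultimately show "z \<le> \<bar>\<phi> b - \<phi> 0\<bar>" using jump_fsum[OF m \<open>finite F\<close>, of 0 b] A
      by (cases "A = {}") force+
  qed
qed

lemma jump_infsum_le:
  assumes m: "mono_on {0..} \<phi>" and a: "0 \<le> a" "a \<le> b"
  shows "infsum (\<lambda>s. rlim \<phi> s - \<phi> s) {a..<b} \<le> \<phi> b - \<phi> a"
  by (rule infsum_le_finite_sums[OF jump_summable[OF m]]) (use jump_fsum[OF m _ a(1)] a in auto)

lemma rpart_eq: "rpart \<phi> t = \<phi> t - \<phi> 0 - infsum (\<lambda>s. rlim \<phi> s - \<phi> s) {0..<t}"
  unfolding rpart_def cpart_def rjumps_def by simp

lemma rpart_diff: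
  assumes m: "mono_on {0..} \<phi>" and a: "0 \<le> a" "a \<le> b"
  shows "rpart \<phi> b - rpart \<phi> a = \<phi> b - \<phi> a - infsum (\<lambda>s. rlim \<phi> s - \<phi> s) {a..<b}"
proof -
  have "{0..<b} = {0..<a} \<union> {a..<b}" using a by auto
  hence "infsum (\<lambda>s. rlim \<phi> s - \<phi> s) {0..<b} = infsum (\<lambda>s. rlim \<phi> s - \<phi> s) {0..<a} + infsum (\<lambda>s. rlim \<phi> s - \<phi> s) {a..<b}"
    using a by (simp, intro infsum_Un_disjoint jump_summable[OF m]) auto
  thus ?thesis unfolding rpart_eq by simp
qed

lemma rpart_mono:
  assumes m: "mono_on {0..} \<phi>" and a: "0 \<le> a" "a \<le> b"
  shows "rpart \<phi> a \<le> rpart \<phi> b"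
  using rpart_diff[OF assms] jump_infsum_le[OF assms] by simp

lemma rpart_rcont:
  assumes m: "mono_on {0..} \<phi>" and t: "t \<ge> 0"
  shows "(rpart \<phi> \<longlongrightarrow> rpart \<phi> t) (at_right t)"
proof (rule tendsto_sandwich[where f="\<lambda>_. rpart \<phi> t" and h="\<lambda>r. rpart \<phi> t + (\<phi> r - rlim \<phi> t)"])
  show "eventually (\<lambda>r. rpart \<phi> t \<le> rpart \<phi> r) (at_right t)"
    unfolding ev_right using rpart_mono[OF m t] by (intro exI[of _ 1]) auto
  have "rpart \<phi> r \<le> rpart \<phi> t + (\<phi> r - rlim \<phi> t)" if r: "t < r" for r
  proof -
    have "{t..<r} = insert t {t<..<r}" using r by auto
    hence "infsum (\<lambda>s. rlim \<phi> s - \<phi> s) {t..<r} = (rlim \<phi> t - \<phi> t) + infsum (\<lambda>s. rlim \<phi> s - \<phi> s) {t<..<r}"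
      by (simp, intro infsum_insert jump_summable[OF m]) (use t in auto)
    moreover have "0 \<le> infsum (\<lambda>s. rlim \<phi> s - \<phi> s) {t<..<r}"
      by (rule infsum_nonneg) (use jump_nonneg[OF m] t in auto)
    ultimately show ?thesis using rpart_diff[OF m t, of r] r by simp
  qed
  thus "eventually (\<lambda>r. rpart \<phi> r \<le> rpart \<phi> t + (\<phi> r - rlim \<phi> t)) (at_right t)"
    unfolding ev_right by (intro exI[of _ 1]) auto
  show "((\<lambda>_. rpart \<phi> t) \<longlongrightarrow> rpart \<phi> t) (at_right t)" by simp
  have "((\<lambda>r. rpart \<phi> t + (\<phi> r - rlim \<phi> t)) \<longlongrightarrow> rpart \<phi> t + (rlim \<phi> t - rlim \<phi> t)) (at_right t)"
    by (intro tendsto_intros mono_rlim(1)[OF m t])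
  thus "((\<lambda>r. rpart \<phi> t + (\<phi> r - rlim \<phi> t)) \<longlongrightarrow> rpart \<phi> t) (at_right t)" by simp
qed




lemma G_mono: "mono_on {0..} \<phi> \<Longrightarrow> x \<le> y \<Longrightarrow> rpart \<phi> (max 0 x) \<le> rpart \<phi> (max 0 (y::real))"
  by (rule rpart_mono) auto

lemma G_rcont:
  assumes m: "mono_on {0..} \<phi>"
  shows "continuous (at_right a) (\<lambda>t. rpart \<phi> (max 0 t))"
  unfolding continuous_within
proof (cases "a \<ge> 0")
  case True
  have "(rpart \<phi> \<longlongrightarrow> rpart \<phi> a) (at_right a)" by (rule rpart_rcont[OF m True])
  hence "((\<lambda>t. rpart \<phi> (max 0 t)) \<longlongrightarrow> rpart \<phi> a) (at_right a)"
    by (rule lim_cong_right) (use True in auto)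
  thus "((\<lambda>t. rpart \<phi> (max 0 t)) \<longlongrightarrow> rpart \<phi> (max 0 a)) (at_right a)" using True by simp
next
  case False
  have "eventually (\<lambda>t. rpart \<phi> (max 0 t) = rpart \<phi> (max 0 a)) (at_right a)"
    unfolding ev_right using False by (intro exI[of _ "-a"]) auto
  thus "((\<lambda>t. rpart \<phi> (max 0 t)) \<longlongrightarrow> rpart \<phi> (max 0 a)) (at_right a)"
    by (rule tendsto_eventually)
qed

lemma LS_Ioc:
  assumes m: "mono_on {0..} \<phi>" and ab: "a \<le> b"
  shows "emeasure (LS (rpart \<phi>)) {a<..b} = ennreal (rpart \<phi> (max 0 b) - rpart \<phi> (max 0 a))"
  unfolding LS_def
  by (rule emeasure_interval_measure_Ioc[OF ab]) (use G_mono[OF m] G_rcont[OF m] in auto)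

lemma LS_interval_zero:
  assumes m: "mono_on {0..} \<phi>"
    and int: "(\<integral>\<^sup>+ s\<in>{0..}. ennreal (g s) \<partial>LS (rpart \<phi>)) = 0"
    and ab: "0 \<le> a" "a \<le> b" and c: "c > 0" and g: "\<And>r. a < r \<Longrightarrow> r \<le> b \<Longrightarrow> c \<le> g r"
  shows "rpart \<phi> b = rpart \<phi> a"
proof -
  let ?M = "LS (rpart \<phi>)"
  have "ennreal c * emeasure ?M {a<..b} = (\<integral>\<^sup>+ s. ennreal c * indicator {a<..b} s \<partial>?M)"
    by (rule nn_integral_cmult_indicator[symmetric]) (simp add: LS_def)
  also have "\<dots> \<le> (\<integral>\<^sup>+ s. ennreal (g s) * indicator {0..} s \<partial>?M)"
    by (rule nn_integral_mono) (use ab g in \<open>auto simp: indicator_def intro!: ennreal_leI\<close>)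
  also have "\<dots> = 0" using int by simp
  finally have "ennreal c * emeasure ?M {a<..b} = 0" by simp
  hence "emeasure ?M {a<..b} = 0" using c by simp
  hence "ennreal (rpart \<phi> b - rpart \<phi> a) = 0" using LS_Ioc[OF m ab(2)] ab by simp
  hence "rpart \<phi> b - rpart \<phi> a \<le> 0" by (simp add: ennreal_eq_0_iff)
  moreover have "rpart \<phi> a \<le> rpart \<phi> b" by (rule rpart_mono[OF m ab])
  ultimately show ?thesis by simp
qed

lemma LS_atom:
  assumes m: "mono_on {0..} \<phi>"
    and int: "(\<integral>\<^sup>+ s\<in>{0..}. ennreal (g s) \<partial>LS (rpart \<phi>)) = 0"
    and s: "s > 0" and gs: "g s > 0" and e: "e > 0"
  shows "\<exists>r\<in>{0..<s}. rpart \<phi> s - rpart \<phi> r < e"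
proof (rule ccontr)
  assume "\<not> ?thesis"
  hence ge: "\<And>r. 0 \<le> r \<Longrightarrow> r < s \<Longrightarrow> e \<le> rpart \<phi> s - rpart \<phi> r" by force
  let ?M = "LS (rpart \<phi>)"
  have "ennreal (g s) * emeasure ?M {s} = (\<integral>\<^sup>+ r. ennreal (g s) * indicator {s} r \<partial>?M)"
    by (rule nn_integral_cmult_indicator[symmetric]) (simp add: LS_def)
  also have "\<dots> \<le> (\<integral>\<^sup>+ r. ennreal (g r) * indicator {0..} r \<partial>?M)"
    by (rule nn_integral_mono) (use s in \<open>auto simp: indicator_def\<close>)
  also have "\<dots> = 0" using int by simp
  finally have z: "emeasure ?M {s} = 0" using gs by simp
  define A where "A n = {s - 1 / real (Suc n) <.. s}" for n
  have "(INF n. emeasure ?M (A n)) = emeasure ?M (\<Inter>n. A n)"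
  proof (rule INF_emeasure_decseq)
    show "range A \<subseteq> sets ?M" by (auto simp: A_def LS_def)
    show "decseq A" unfolding decseq_def
    proof (intro allI impI)
      fix m n :: nat assume "m \<le> n"
      hence "1 / real (Suc n) \<le> 1 / real (Suc m)" by (intro divide_left_mono) auto
      thus "A n \<subseteq> A m" unfolding A_def by auto
    qed
    show "emeasure ?M (A i) \<noteq> \<infinity>" for i unfolding A_def
      by (subst LS_Ioc[OF m]) auto
  qed
  also have "(\<Inter>n. A n) = {s}"
  proof
    show "{s} \<subseteq> (\<Inter>n. A n)" by (auto simp: A_def)
    show "(\<Inter>n. A n) \<subseteq> {s}"
    proof
      fix x assume x: "x \<in> (\<Inter>n. A n)"
      have "x \<in> A 0" using x by blast
      hence "x \<le> s" by (simp add: A_def)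
      moreover have "\<not> x < s"
      proof
        assume "x < s"
        then obtain n where "inverse (real (Suc n)) < s - x" using reals_Archimedean[of "s - x"] by auto
        hence n: "1 / real (Suc n) < s - x" by (simp add: inverse_eq_divide)
        have "x \<in> A n" using x by blast
        hence "s - 1 / real (Suc n) < x" by (simp add: A_def)
        thus False using n by simp
      qed
      ultimately show "x \<in> {s}" by auto
    qed
  qed
  finally have "(INF n. emeasure ?M (A n)) = 0" using z by simp
  moreover have "ennreal e \<le> (INF n. emeasure ?M (A n))"
  proof (rule INF_greatest)
    fix n
    let ?r = "max 0 (s - 1 / real (Suc n))"
    have "emeasure ?M (A n) = ennreal (rpart \<phi> (max 0 s) - rpart \<phi> ?r)"
      unfolding A_def by (subst LS_Ioc[OF m]) auto
    moreover have "e \<le> rpart \<phi> s - rpart \<phi> ?r" by (rule ge) (use s in auto)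
    ultimately show "ennreal e \<le> emeasure ?M (A n)" using s by (simp add: ennreal_leI)
  qed
  ultimately show False using e by simp
qed

lemma phi_diff:
  assumes m: "mono_on {0..} \<phi>" and a: "0 \<le> a" "a \<le> b"
  shows "\<phi> b - \<phi> a = (rpart \<phi> b - rpart \<phi> a) + infsum (\<lambda>s. rlim \<phi> s - \<phi> s) {a..<b}"
  using rpart_diff[OF assms] by simp

lemma NI_gen:
  assumes m: "mono_on {0..} \<phi>"
    and int: "(\<integral>\<^sup>+ s\<in>{0..}. ennreal (g s) \<partial>LS (rpart \<phi>)) = 0"
    and ab: "0 \<le> a" "a \<le> b" and c: "c > 0" and g: "\<And>r. a \<le> r \<Longrightarrow> r \<le> b \<Longrightarrow> c \<le> g r"
    and J: "\<And>r. a \<le> r \<Longrightarrow> r < b \<Longrightarrow> rlim \<phi> r = \<phi> r"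
  shows "\<phi> a = \<phi> b"
proof -
  have "rpart \<phi> b = rpart \<phi> a" by (rule LS_interval_zero[OF m int ab c]) (use g in auto)
  moreover have "infsum (\<lambda>s. rlim \<phi> s - \<phi> s) {a..<b} = infsum (\<lambda>s. 0) {a..<b}"
    by (rule infsum_cong) (use J in auto)
  ultimately show ?thesis using phi_diff[OF m ab] by simp
qed

lemma jump_infsum_le_sup:
  assumes m: "mono_on {0..} \<phi>" and r: "0 \<le> r" "r < s"
  shows "infsum (\<lambda>x. rlim \<phi> x - \<phi> x) {r..<s} \<le> (SUP x\<in>{0..<s}. \<phi> x) - \<phi> r"
proof (rule infsum_le_finite_sums[OF jump_summable[OF m]])
  show "{r..<s} \<subseteq> {0..<s}" using r by auto
  have bdd: "bdd_above (\<phi> ` {0..<s})" by (rule bdd_aboveI[of _ "\<phi> s"]) (use m in \<open>auto simp: mono_on_def\<close>)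
  fix F assume F: "finite F" "F \<subseteq> {r..<s}"
  show "(\<Sum>x\<in>F. rlim \<phi> x - \<phi> x) \<le> (SUP x\<in>{0..<s}. \<phi> x) - \<phi> r"
  proof (cases "F = {}")
    case True
    have "\<phi> r \<le> (SUP x\<in>{0..<s}. \<phi> x)" by (rule cSUP_upper[OF _ bdd]) (use r in auto)
    thus ?thesis using True by simp
  next
    case False
    define m' where "m' = (Max F + s) / 2"
    have "Max F \<in> F" using F False by auto
    hence Mx: "r \<le> Max F" "Max F < s" using F by auto
    have "F \<subseteq> {r..<m'}" using F False Max_ge[OF F(1)] Mx unfolding m'_def by fastforce
    hence "(\<Sum>x\<in>F. rlim \<phi> x - \<phi> x) \<le> \<phi> m' - \<phi> r"
      by (rule jump_fsum[OF m F(1) r(1)]) (use Mx in \<open>auto simp: m'_def\<close>)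
    also have "\<phi> m' \<le> (SUP x\<in>{0..<s}. \<phi> x)" by (rule cSUP_upper[OF _ bdd]) (use Mx r in \<open>auto simp: m'_def\<close>)
    finally show ?thesis by simp
  qed
qed

lemma LC_gen:
  assumes m: "mono_on {0..} \<phi>"
    and int: "(\<integral>\<^sup>+ s\<in>{0..}. ennreal (g s) \<partial>LS (rpart \<phi>)) = 0"
    and s: "s > 0" and gs: "g s > 0" and e: "e > 0"
  shows "\<exists>r\<in>{0..<s}. \<phi> s - \<phi> r < e"
proof -
  have bdd: "bdd_above (\<phi> ` {0..<s})" by (rule bdd_aboveI[of _ "\<phi> s"]) (use m s in \<open>auto simp: mono_on_def\<close>)
  have "(SUP x\<in>{0..<s}. \<phi> x) - e/2 < (SUP x\<in>{0..<s}. \<phi> x)" using e by simp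
  then obtain r0 where r0: "r0 \<in> {0..<s}" "(SUP x\<in>{0..<s}. \<phi> x) - e/2 < \<phi> r0"
    using less_cSUP_iff[OF _ bdd] s by force
  obtain r1 where r1: "r1 \<in> {0..<s}" "rpart \<phi> s - rpart \<phi> r1 < e/2"
    using LS_atom[OF m int s gs, of "e/2"] e by auto
  define r where "r = max r0 r1"
  have r: "0 \<le> r" "r < s" "r0 \<le> r" "r1 \<le> r" using r0 r1 by (auto simp: r_def)
  have e1: "\<phi> s - \<phi> r = (rpart \<phi> s - rpart \<phi> r) + infsum (\<lambda>x. rlim \<phi> x - \<phi> x) {r..<s}"
    by (rule phi_diff[OF m]) (use r in auto)
  have e2: "rpart \<phi> s - rpart \<phi> r \<le> rpart \<phi> s - rpart \<phi> r1"
    using rpart_mono[OF m, of r1 r] r r1 by auto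
  have e3: "infsum (\<lambda>x. rlim \<phi> x - \<phi> x) {r..<s} \<le> (SUP x\<in>{0..<s}. \<phi> x) - \<phi> r"
    by (rule jump_infsum_le_sup[OF m r(1,2)])
  have "\<phi> r0 \<le> \<phi> r" using m r r0 by (auto simp: mono_on_def)
  thus ?thesis using e1 e2 e3 r r0 r1 by (intro bexI[of _ r]) auto
qed




lemma ev_left: "eventually P (at_left (t::real)) \<longleftrightarrow> (\<exists>d>0. \<forall>r. t - d < r \<and> r < t \<longrightarrow> P r)"
  unfolding eventually_at_left_field
proof
  assume "\<exists>b<t. \<forall>y>b. y < t \<longrightarrow> P y"
  then obtain b where "b < t" "\<forall>y>b. y < t \<longrightarrow> P y" by auto
  thus "\<exists>d>0. \<forall>r. t - d < r \<and> r < t \<longrightarrow> P r" by (intro exI[of _ "t - b"]) auto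
next
  assume "\<exists>d>0. \<forall>r. t - d < r \<and> r < t \<longrightarrow> P r"
  then obtain d where "d > 0" "\<forall>r. t - d < r \<and> r < t \<longrightarrow> P r" by auto
  thus "\<exists>b<t. \<forall>y>b. y < t \<longrightarrow> P y" by (intro exI[of _ "t - d"]) auto
qed

lemma reg_local_bound:
  assumes f: "regulated f" and s: "s \<ge> 0"
  shows "\<exists>d>0. \<exists>M. \<forall>r. r \<ge> 0 \<and> \<bar>r - s\<bar> < d \<longrightarrow> \<bar>f r\<bar> \<le> M"
proof -
  obtain d1 where d1: "d1 > 0" "\<forall>r. s < r \<and> r < s + d1 \<longrightarrow> \<bar>f r - rlim f s\<bar> < 1"
    using lim_eps[OF reg_rlim[OF f s], of 1] by auto
  obtain d2 L2 where d2: "d2 > 0" "\<forall>r. s - d2 < r \<and> r < s \<and> r \<ge> 0 \<longrightarrow> \<bar>f r - L2\<bar> < 1"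
  proof (cases "s > 0")
    case True
    then obtain L where L: "(f \<longlongrightarrow> L) (at_left s)" using f unfolding regulated_def by blast
    have "eventually (\<lambda>r. dist (f r) L < 1) (at_left s)" using L tendsto_iff zero_less_one by blast
    then obtain d where "d > 0" "\<forall>r. s - d < r \<and> r < s \<longrightarrow> dist (f r) L < 1" unfolding ev_left by auto
    thus ?thesis using that[of d L] by (auto simp: dist_real_def)
  next
    case False
    thus ?thesis using that[of 1 0] s by auto
  qed
  show ?thesis
  proof (intro exI conjI allI impI)
    show "min d1 d2 > 0" using d1 d2 by auto
    fix r assume r: "r \<ge> 0 \<and> \<bar>r - s\<bar> < min d1 d2"
    consider "r = s" | "s < r" | "r < s" by linarith
    thus "\<bar>f r\<bar> \<le> \<bar>f s\<bar> + \<bar>rlim f s\<bar> + \<bar>L2\<bar> + 1"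
    proof cases
      case 2 thus ?thesis using d1(2) r by (smt (verit, best))
    next
      case 3 thus ?thesis using d2(2) r by (smt (verit, best))
    qed auto
  qed
qed

lemma reg_bounded:
  assumes f: "regulated f"
  shows "\<exists>M. \<forall>s\<in>{0..T}. \<bar>f s\<bar> \<le> M"
proof -
  have "\<forall>s. \<exists>p. s \<ge> 0 \<longrightarrow> fst p > 0 \<and> (\<forall>r. r \<ge> 0 \<and> \<bar>r - s\<bar> < fst p \<longrightarrow> \<bar>f r\<bar> \<le> snd p)"
    using reg_local_bound[OF f] by fastforce
  then obtain P where P: "\<And>s. s \<ge> 0 \<Longrightarrow> fst (P s) > 0 \<and> (\<forall>r. r \<ge> 0 \<and> \<bar>r - s\<bar> < fst (P s) \<longrightarrow> \<bar>f r\<bar> \<le> snd (P s))"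
    by metis
  have "compact {0..T}" by simp
  moreover have "\<And>c. c \<in> {0..T} \<Longrightarrow> open (ball c (fst (P c)))" by simp
  moreover have "{0..T} \<subseteq> (\<Union>c\<in>{0..T}. ball c (fst (P c)))"
  proof
    fix s assume "s \<in> {0..T}"
    thus "s \<in> (\<Union>c\<in>{0..T}. ball c (fst (P c)))" using P[of s] by (intro UN_I[of s]) auto
  qed
  ultimately obtain C' where C': "C' \<subseteq> {0..T}" "finite C'" "{0..T} \<subseteq> (\<Union>c\<in>C'. ball c (fst (P c)))"
    by (rule compactE_image)
  show ?thesis
  proof (intro exI ballI)
    fix s assume s: "s \<in> {0..T}"
    then obtain c where c: "c \<in> C'" "s \<in> ball c (fst (P c))" using C' by blast
    hence "\<bar>s - c\<bar> < fst (P c)" by (auto simp: dist_real_def)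
    hence "\<bar>f s\<bar> \<le> snd (P c)" using P[of c] c C' s by auto
    also have "\<dots> \<le> \<bar>snd (P c)\<bar>" by simp
    also have "\<dots> \<le> (\<Sum>c\<in>C'. \<bar>snd (P c)\<bar>)" by (rule member_le_sum) (use c C' in auto)
    finally show "\<bar>f s\<bar> \<le> (\<Sum>c\<in>C'. \<bar>snd (P c)\<bar>)" .
  qed
qed

lemma reg_bounded_rlim:
  assumes f: "regulated f"
  shows "\<exists>M. \<forall>s\<in>{0..T}. \<bar>f s\<bar> \<le> M \<and> \<bar>rlim f s\<bar> \<le> M"
proof -
  obtain M where M: "\<forall>s\<in>{0..T+1}. \<bar>f s\<bar> \<le> M" using reg_bounded[OF f] by blast
  show ?thesis
  proof (intro exI ballI conjI)
    fix s assume s: "s \<in> {0..T}"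
    show "\<bar>f s\<bar> \<le> M" using M s by auto
    have "rlim f s \<le> M"
    proof (rule lim_upper[OF reg_rlim[OF f], of s "s+1"])
      fix r assume "s < r" "r < s + 1"
      hence "r \<in> {0..T+1}" using s by auto
      thus "f r \<le> M" using M by force
    qed (use s in auto)
    moreover have "-M \<le> rlim f s"
    proof (rule lim_lower[OF reg_rlim[OF f], of s "s+1"])
      fix r assume "s < r" "r < s + 1"
      hence "r \<in> {0..T+1}" using s by auto
      thus "-M \<le> f r" using M by force
    qed (use s in auto)
    ultimately show "\<bar>rlim f s\<bar> \<le> M" by simp
  qed
qed

lemma jump_term_zero:
  assumes m: "mono_on {0..} \<phi>" and a0: "\<And>s. s \<in> {0..t} \<Longrightarrow> 0 \<le> a s"
    and aM: "\<And>s. s \<in> {0..t} \<Longrightarrow> a s \<le> M"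
    and sum: "infsum (\<lambda>s. a s * (rlim \<phi> s - \<phi> s)) {0..t} = 0" and s: "s \<in> {0..t}"
  shows "a s * (rlim \<phi> s - \<phi> s) = 0"
proof -
  let ?h = "\<lambda>s. a s * (rlim \<phi> s - \<phi> s)"
  have hn: "\<And>s. s \<in> {0..t} \<Longrightarrow> 0 \<le> ?h s" using a0 jump_nonneg[OF m] by auto
  have summ: "?h summable_on {0..t}"
  proof (rule nonneg_bdd_above_summable_on)
    show "\<And>x. x \<in> {0..t} \<Longrightarrow> 0 \<le> ?h x" by (rule hn)
    show "bdd_above (sum ?h ` {F. F \<subseteq> {0..t} \<and> finite F})"
    proof (rule bdd_aboveI[of _ "max M 0 * (\<phi> (t+1) - \<phi> 0)"])
      fix z assume "z \<in> sum ?h ` {F. F \<subseteq> {0..t} \<and> finite F}"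
      then obtain F where F: "F \<subseteq> {0..t}" "finite F" "z = sum ?h F" by auto
      have "sum ?h F \<le> (\<Sum>s\<in>F. max M 0 * (rlim \<phi> s - \<phi> s))"
      proof (rule sum_mono)
        fix x assume "x \<in> F"
        hence "x \<in> {0..t}" using F by auto
        thus "?h x \<le> max M 0 * (rlim \<phi> x - \<phi> x)"
          using aM[of x] jump_nonneg[OF m, of x] by (intro mult_right_mono) auto
      qed
      also have "\<dots> = max M 0 * (\<Sum>s\<in>F. rlim \<phi> s - \<phi> s)" by (simp add: sum_distrib_left)
      also have "\<dots> \<le> max M 0 * (\<phi> (t+1) - \<phi> 0)"
      proof (rule mult_left_mono)
        show "(\<Sum>s\<in>F. rlim \<phi> s - \<phi> s) \<le> \<phi> (t + 1) - \<phi> 0"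
          by (rule jump_fsum[OF m F(2)]) (use F s in auto)
      qed simp
      finally show "z \<le> max M 0 * (\<phi> (t+1) - \<phi> 0)" using F by simp
    qed
  qed
  have "infsum ?h {s} \<le> infsum ?h {0..t}"
    by (rule infsum_mono2) (use summ s hn in auto)
  thus ?thesis using sum hn[OF s] by simp
qed




locale setting =
  fixes l u y \<xi> \<kappa> x \<phi>1 \<phi>2 :: "real \<Rightarrow> real"
  assumes regl: "regulated l" and regu: "regulated u" and regy: "regulated y"
    and xi_eq: "\<And>t. t \<ge> 0 \<Longrightarrow> \<xi> t = y t + \<kappa> t"
    and xi_l: "\<And>t. t \<ge> 0 \<Longrightarrow> l t \<le> \<xi> t"
    and km: "mono_on {0..} \<kappa>" and krc: "\<And>t. t \<ge> 0 \<Longrightarrow> (\<kappa> \<longlongrightarrow> \<kappa> t) (at_right t)"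
    and k0: "\<kappa> 0 = 0"
    and kint: "(\<integral>\<^sup>+ s\<in>{0..}. ennreal (min (\<xi> s - l s) (rlim \<xi> s - rlim l s)) \<partial>LS \<kappa>) = 0"
    and regx: "regulated x"
    and x_eq: "\<And>t. t \<ge> 0 \<Longrightarrow> x t = y t + \<phi>1 t - \<phi>2 t"
    and x_l: "\<And>t. t \<ge> 0 \<Longrightarrow> l t \<le> x t" and x_u: "\<And>t. t \<ge> 0 \<Longrightarrow> x t \<le> u t"
    and m1: "mono_on {0..} \<phi>1" and m2: "mono_on {0..} \<phi>2"
    and int1: "(\<integral>\<^sup>+ s\<in>{0..}. ennreal (min (x s - l s) (rlim x s - rlim l s)) \<partial>LS (rpart \<phi>1)) = 0"
    and int2: "(\<integral>\<^sup>+ s\<in>{0..}. ennreal (min (u s - x s) (rlim u s - rlim x s)) \<partial>LS (rpart \<phi>2)) = 0"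
    and js1: "\<And>t. t \<ge> 0 \<Longrightarrow> (\<Sum>\<^sub>\<infinity>s\<in>{0..t}. (rlim x s - rlim l s) * (rlim \<phi>1 s - \<phi>1 s)) = 0"
    and js2: "\<And>t. t \<ge> 0 \<Longrightarrow> (\<Sum>\<^sub>\<infinity>s\<in>{0..t}. (u s - x s) * (rlim \<phi>1 s - \<phi>1 s)) = 0"
    and js3: "\<And>t. t \<ge> 0 \<Longrightarrow> (\<Sum>\<^sub>\<infinity>s\<in>{0..t}. (rlim u s - rlim x s) * (rlim \<phi>2 s - \<phi>2 s)) = 0"
    and js4: "\<And>t. t \<ge> 0 \<Longrightarrow> (\<Sum>\<^sub>\<infinity>s\<in>{0..t}. (x s - l s) * (rlim \<phi>2 s - \<phi>2 s)) = 0"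
    and p10: "\<phi>1 0 = 0" and p20: "\<phi>2 0 = 0"
begin

definition eta where "eta t = \<xi> t - x t"
definition etap where "etap t = rlim \<xi> t - rlim x t"

lemma rx: "t \<ge> 0 \<Longrightarrow> (x \<longlongrightarrow> rlim x t) (at_right t)" using reg_rlim[OF regx] .
lemma rl: "t \<ge> 0 \<Longrightarrow> (l \<longlongrightarrow> rlim l t) (at_right t)" using reg_rlim[OF regl] .
lemma ru: "t \<ge> 0 \<Longrightarrow> (u \<longlongrightarrow> rlim u t) (at_right t)" using reg_rlim[OF regu] .
lemma ry: "t \<ge> 0 \<Longrightarrow> (y \<longlongrightarrow> rlim y t) (at_right t)" using reg_rlim[OF regy] .

lemma krlim: "t \<ge> 0 \<Longrightarrow> rlim \<kappa> t = \<kappa> t" using rlim_eq krc by blast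

lemma rxi_full: assumes t: "t \<ge> 0"
  shows "(\<xi> \<longlongrightarrow> rlim y t + \<kappa> t) (at_right t)" "rlim \<xi> t = rlim y t + \<kappa> t"
proof -
  have "((\<lambda>r. y r + \<kappa> r) \<longlongrightarrow> rlim y t + \<kappa> t) (at_right t)" by (intro tendsto_add ry krc t)
  thus 1: "(\<xi> \<longlongrightarrow> rlim y t + \<kappa> t) (at_right t)" by (rule lim_cong_right) (use t xi_eq in auto)
  thus "rlim \<xi> t = rlim y t + \<kappa> t" by (rule rlim_eq)
qed

lemma rxi: "t \<ge> 0 \<Longrightarrow> (\<xi> \<longlongrightarrow> rlim \<xi> t) (at_right t)" using rxi_full by simp

lemma rlim_x: assumes t: "t \<ge> 0"
  shows "rlim x t = rlim y t + rlim \<phi>1 t - rlim \<phi>2 t"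
proof -
  have "((\<lambda>r. y r + \<phi>1 r - \<phi>2 r) \<longlongrightarrow> rlim y t + rlim \<phi>1 t - rlim \<phi>2 t) (at_right t)"
    by (intro tendsto_add tendsto_diff ry mono_rlim(1)[OF m1] mono_rlim(1)[OF m2] t)
  hence "(x \<longlongrightarrow> rlim y t + rlim \<phi>1 t - rlim \<phi>2 t) (at_right t)"
    by (rule lim_cong_right) (use t x_eq in auto)
  thus ?thesis by (rule rlim_eq)
qed

lemma eta_lim: "t \<ge> 0 \<Longrightarrow> (eta \<longlongrightarrow> etap t) (at_right t)"
  unfolding eta_def[abs_def] etap_def by (intro tendsto_diff rxi rx)

lemma eta_eq: "t \<ge> 0 \<Longrightarrow> eta t = \<kappa> t - \<phi>1 t + \<phi>2 t"
  unfolding eta_def using xi_eq x_eq by simp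

lemma etap_eq: "t \<ge> 0 \<Longrightarrow> etap t = \<kappa> t - rlim \<phi>1 t + rlim \<phi>2 t"
  unfolding etap_def using rxi_full(2) rlim_x by simp

lemma eta0: "eta 0 = 0" using eta_eq[of 0] k0 p10 p20 by simp

lemma jump_eta: "t \<ge> 0 \<Longrightarrow> etap t - eta t = (rlim \<phi>2 t - \<phi>2 t) - (rlim \<phi>1 t - \<phi>1 t)"
  using eta_eq etap_eq by simp

lemma rlim_le_diff:
  fixes f g :: "real \<Rightarrow> real"
  assumes "(f \<longlongrightarrow> a) (at_right t)" "(g \<longlongrightarrow> b) (at_right t)" "t \<ge> 0" "\<And>r. r > t \<Longrightarrow> f r \<le> g r"
  shows "a \<le> b"
proof -
  have "((\<lambda>r. g r - f r) \<longlongrightarrow> b - a) (at_right t)" by (intro tendsto_diff assms)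
  hence "0 \<le> b - a" by (rule lim_lower[of _ _ _ "t+1"]) (use assms in auto)
  thus ?thesis by simp
qed

lemma rl_rx: "t \<ge> 0 \<Longrightarrow> rlim l t \<le> rlim x t"
  by (rule rlim_le_diff[OF rl rx]) (use x_l in auto)
lemma rx_ru: "t \<ge> 0 \<Longrightarrow> rlim x t \<le> rlim u t"
  by (rule rlim_le_diff[OF rx ru]) (use x_u in auto)
lemma rl_rxi: "t \<ge> 0 \<Longrightarrow> rlim l t \<le> rlim \<xi> t"
  by (rule rlim_le_diff[OF rl rxi]) (use xi_l in auto)

lemma J1_nonneg: "t \<ge> 0 \<Longrightarrow> 0 \<le> rlim \<phi>1 t - \<phi>1 t" using jump_nonneg[OF m1] .
lemma J2_nonneg: "t \<ge> 0 \<Longrightarrow> 0 \<le> rlim \<phi>2 t - \<phi>2 t" using jump_nonneg[OF m2] .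

lemma bound_all: "\<exists>M. \<forall>s\<in>{0..T}. \<bar>x s\<bar> \<le> M \<and> \<bar>rlim x s\<bar> \<le> M \<and> \<bar>l s\<bar> \<le> M \<and> \<bar>rlim l s\<bar> \<le> M
   \<and> \<bar>u s\<bar> \<le> M \<and> \<bar>rlim u s\<bar> \<le> M"
proof -
  obtain M1 where M1: "\<forall>s\<in>{0..T}. \<bar>x s\<bar> \<le> M1 \<and> \<bar>rlim x s\<bar> \<le> M1" using reg_bounded_rlim[OF regx] by blast
  obtain M2 where M2: "\<forall>s\<in>{0..T}. \<bar>l s\<bar> \<le> M2 \<and> \<bar>rlim l s\<bar> \<le> M2" using reg_bounded_rlim[OF regl] by blast
  obtain M3 where M3: "\<forall>s\<in>{0..T}. \<bar>u s\<bar> \<le> M3 \<and> \<bar>rlim u s\<bar> \<le> M3" using reg_bounded_rlim[OF regu] by blast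
  show ?thesis
  proof (intro exI ballI)
    fix s assume "s \<in> {0..T}"
    hence "\<bar>x s\<bar> \<le> M1 \<and> \<bar>rlim x s\<bar> \<le> M1" "\<bar>l s\<bar> \<le> M2 \<and> \<bar>rlim l s\<bar> \<le> M2" "\<bar>u s\<bar> \<le> M3 \<and> \<bar>rlim u s\<bar> \<le> M3"
      using M1 M2 M3 by blast+
    thus "\<bar>x s\<bar> \<le> max M1 (max M2 M3) \<and> \<bar>rlim x s\<bar> \<le> max M1 (max M2 M3) \<and> \<bar>l s\<bar> \<le> max M1 (max M2 M3) \<and> \<bar>rlim l s\<bar> \<le> max M1 (max M2 M3)
   \<and> \<bar>u s\<bar> \<le> max M1 (max M2 M3) \<and> \<bar>rlim u s\<bar> \<le> max M1 (max M2 M3)" by linarith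
  qed
qed

lemma J1_pos: assumes t: "t \<ge> 0" and j: "rlim \<phi>1 t > \<phi>1 t"
  shows "rlim x t = rlim l t" "x t = u t"
proof -
  obtain M where M: "\<forall>s\<in>{0..t}. \<bar>x s\<bar> \<le> M \<and> \<bar>rlim x s\<bar> \<le> M \<and> \<bar>l s\<bar> \<le> M \<and> \<bar>rlim l s\<bar> \<le> M
   \<and> \<bar>u s\<bar> \<le> M \<and> \<bar>rlim u s\<bar> \<le> M" using bound_all by blast
  have "(rlim x t - rlim l t) * (rlim \<phi>1 t - \<phi>1 t) = 0"
  proof (rule jump_term_zero[OF m1, where a="\<lambda>s. rlim x s - rlim l s" and M="2*M" and t=t])
    show "\<And>s. s \<in> {0..t} \<Longrightarrow> 0 \<le> rlim x s - rlim l s" using rl_rx by fastforce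
    fix s assume "s \<in> {0..t}"
    hence "\<bar>x s\<bar> \<le> M \<and> \<bar>rlim x s\<bar> \<le> M \<and> \<bar>l s\<bar> \<le> M \<and> \<bar>rlim l s\<bar> \<le> M
   \<and> \<bar>u s\<bar> \<le> M \<and> \<bar>rlim u s\<bar> \<le> M" using M by blast
    thus "rlim x s - rlim l s \<le> 2*M" by linarith
  qed (use js1 t in auto)
  thus "rlim x t = rlim l t" using j by simp
  have "(u t - x t) * (rlim \<phi>1 t - \<phi>1 t) = 0"
  proof (rule jump_term_zero[OF m1, where a="\<lambda>s. u s - x s" and M="2*M" and t=t])
    show "\<And>s. s \<in> {0..t} \<Longrightarrow> 0 \<le> u s - x s" using x_u by fastforce
    fix s assume "s \<in> {0..t}"
    hence "\<bar>x s\<bar> \<le> M \<and> \<bar>rlim x s\<bar> \<le> M \<and> \<bar>l s\<bar> \<le> M \<and> \<bar>rlim l s\<bar> \<le> M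
   \<and> \<bar>u s\<bar> \<le> M \<and> \<bar>rlim u s\<bar> \<le> M" using M by blast
    thus "u s - x s \<le> 2*M" by linarith
  qed (use js2 t in auto)
  thus "x t = u t" using j by simp
qed

lemma J2_pos: assumes t: "t \<ge> 0" and j: "rlim \<phi>2 t > \<phi>2 t"
  shows "rlim x t = rlim u t" "x t = l t"
proof -
  obtain M where M: "\<forall>s\<in>{0..t}. \<bar>x s\<bar> \<le> M \<and> \<bar>rlim x s\<bar> \<le> M \<and> \<bar>l s\<bar> \<le> M \<and> \<bar>rlim l s\<bar> \<le> M
   \<and> \<bar>u s\<bar> \<le> M \<and> \<bar>rlim u s\<bar> \<le> M" using bound_all by blast
  have "(rlim u t - rlim x t) * (rlim \<phi>2 t - \<phi>2 t) = 0"
  proof (rule jump_term_zero[OF m2, where a="\<lambda>s. rlim u s - rlim x s" and M="2*M" and t=t])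
    show "\<And>s. s \<in> {0..t} \<Longrightarrow> 0 \<le> rlim u s - rlim x s" using rx_ru by fastforce
    fix s assume "s \<in> {0..t}"
    hence "\<bar>x s\<bar> \<le> M \<and> \<bar>rlim x s\<bar> \<le> M \<and> \<bar>l s\<bar> \<le> M \<and> \<bar>rlim l s\<bar> \<le> M
   \<and> \<bar>u s\<bar> \<le> M \<and> \<bar>rlim u s\<bar> \<le> M" using M by blast
    thus "rlim u s - rlim x s \<le> 2*M" by linarith
  qed (use js3 t in auto)
  thus "rlim x t = rlim u t" using j by simp
  have "(x t - l t) * (rlim \<phi>2 t - \<phi>2 t) = 0"
  proof (rule jump_term_zero[OF m2, where a="\<lambda>s. x s - l s" and M="2*M" and t=t])
    show "\<And>s. s \<in> {0..t} \<Longrightarrow> 0 \<le> x s - l s" using x_l by fastforce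
    fix s assume "s \<in> {0..t}"
    hence "\<bar>x s\<bar> \<le> M \<and> \<bar>rlim x s\<bar> \<le> M \<and> \<bar>l s\<bar> \<le> M \<and> \<bar>rlim l s\<bar> \<le> M
   \<and> \<bar>u s\<bar> \<le> M \<and> \<bar>rlim u s\<bar> \<le> M" using M by blast
    thus "x s - l s \<le> 2*M" by linarith
  qed (use js4 t in auto)
  thus "x t = l t" using j by simp
qed

lemma rpart_k: "t \<ge> 0 \<Longrightarrow> rpart \<kappa> t = \<kappa> t"
proof -
  assume t: "t \<ge> 0"
  have "infsum (\<lambda>s. rlim \<kappa> s - \<kappa> s) {0..<t} = infsum (\<lambda>s. 0) {0..<t}"
    by (rule infsum_cong) (use krlim in auto)
  thus ?thesis unfolding rpart_eq using k0 by simp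
qed

lemma kint': "(\<integral>\<^sup>+ s\<in>{0..}. ennreal (min (\<xi> s - l s) (rlim \<xi> s - rlim l s)) \<partial>LS (rpart \<kappa>)) = 0"
proof -
  have "(\<lambda>t. rpart \<kappa> (max 0 t)) = (\<lambda>t. \<kappa> (max 0 t))" using rpart_k by auto
  hence "LS (rpart \<kappa>) = LS \<kappa>" unfolding LS_def by simp
  thus ?thesis using kint by simp
qed

definition g1 where "g1 r = min (x r - l r) (rlim x r - rlim l r)"
definition g2 where "g2 r = min (u r - x r) (rlim u r - rlim x r)"
definition gk where "gk r = min (\<xi> r - l r) (rlim \<xi> r - rlim l r)"

lemma NI1: assumes "0 \<le> a" "a \<le> b" "c > 0" "\<And>r. a \<le> r \<Longrightarrow> r \<le> b \<Longrightarrow> c \<le> g1 r"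
  shows "\<phi>1 a = \<phi>1 b"
proof (rule NI_gen[OF m1 int1 assms(1,2,3)])
  show "\<And>r. a \<le> r \<Longrightarrow> r \<le> b \<Longrightarrow> c \<le> min (x r - l r) (rlim x r - rlim l r)" using assms(4) g1_def by simp
  fix r assume r: "a \<le> r" "r < b"
  show "rlim \<phi>1 r = \<phi>1 r"
  proof (rule ccontr)
    assume "rlim \<phi>1 r \<noteq> \<phi>1 r"
    hence "rlim \<phi>1 r > \<phi>1 r" using J1_nonneg[of r] r assms by auto
    hence "rlim x r = rlim l r" using J1_pos r assms by auto
    hence "g1 r \<le> 0" unfolding g1_def by simp
    thus False using assms(4)[of r] assms(3) r by auto
  qed
qed

lemma NI2: assumes "0 \<le> a" "a \<le> b" "c > 0" "\<And>r. a \<le> r \<Longrightarrow> r \<le> b \<Longrightarrow> c \<le> g2 r"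
  shows "\<phi>2 a = \<phi>2 b"
proof (rule NI_gen[OF m2 int2 assms(1,2,3)])
  show "\<And>r. a \<le> r \<Longrightarrow> r \<le> b \<Longrightarrow> c \<le> min (u r - x r) (rlim u r - rlim x r)" using assms(4) g2_def by simp
  fix r assume r: "a \<le> r" "r < b"
  show "rlim \<phi>2 r = \<phi>2 r"
  proof (rule ccontr)
    assume "rlim \<phi>2 r \<noteq> \<phi>2 r"
    hence "rlim \<phi>2 r > \<phi>2 r" using J2_nonneg[of r] r assms by auto
    hence "rlim x r = rlim u r" using J2_pos r assms by auto
    hence "g2 r \<le> 0" unfolding g2_def by simp
    thus False using assms(4)[of r] assms(3) r by auto
  qed
qed

lemma NIk: assumes "0 \<le> a" "a \<le> b" "c > 0" "\<And>r. a \<le> r \<Longrightarrow> r \<le> b \<Longrightarrow> c \<le> gk r"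
  shows "\<kappa> a = \<kappa> b"
proof (rule NI_gen[OF km kint' assms(1,2,3)])
  show "\<And>r. a \<le> r \<Longrightarrow> r \<le> b \<Longrightarrow> c \<le> min (\<xi> r - l r) (rlim \<xi> r - rlim l r)" using assms(4) gk_def by simp
  show "\<And>r. a \<le> r \<Longrightarrow> r < b \<Longrightarrow> rlim \<kappa> r = \<kappa> r" using krlim assms by auto
qed

lemma LC1: "s > 0 \<Longrightarrow> g1 s > 0 \<Longrightarrow> e > 0 \<Longrightarrow> \<exists>r\<in>{0..<s}. \<phi>1 s - \<phi>1 r < e"
  by (rule LC_gen[OF m1 int1]) (auto simp: g1_def)
lemma LC2: "s > 0 \<Longrightarrow> g2 s > 0 \<Longrightarrow> e > 0 \<Longrightarrow> \<exists>r\<in>{0..<s}. \<phi>2 s - \<phi>2 r < e"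
  by (rule LC_gen[OF m2 int2]) (auto simp: g2_def)
lemma LCk: "s > 0 \<Longrightarrow> gk s > 0 \<Longrightarrow> e > 0 \<Longrightarrow> \<exists>r\<in>{0..<s}. \<kappa> s - \<kappa> r < e"
  by (rule LC_gen[OF km kint']) (auto simp: gk_def)

end




context setting
begin

definition A where "A s = max 0 (max (\<xi> s - u s) (rlim \<xi> s - rlim u s))"
definition B where "B r = max (min (\<xi> r - l r) (rlim \<xi> r - rlim l r)) (\<xi> r - u r)"

lemma B_nonneg: "r \<ge> 0 \<Longrightarrow> 0 \<le> B r"
  using xi_l[of r] rl_rxi[of r] unfolding B_def by auto

lemma B_le: "r \<ge> 0 \<Longrightarrow> B r \<le> \<xi> r - l r"
  using x_l[of r] x_u[of r] unfolding B_def by auto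

lemma etap_lt_eta: "s \<ge> 0 \<Longrightarrow> etap s < eta s \<Longrightarrow> x s = u s"
  using jump_eta[of s] J2_nonneg[of s] J1_pos(2)[of s] by force

lemma etap_gt_eta: "s \<ge> 0 \<Longrightarrow> etap s > eta s \<Longrightarrow> x s = l s \<and> rlim x s = rlim u s"
  using jump_eta[of s] J1_nonneg[of s] J2_pos[of s] by force

lemma B_ge_eta: assumes r: "r \<ge> 0" shows "eta r \<le> B r"
proof (cases "etap r < eta r")
  case True
  hence "x r = u r" using etap_lt_eta r by blast
  thus ?thesis unfolding B_def eta_def by simp
next
  case False
  have "eta r \<le> \<xi> r - l r" using x_l[OF r] unfolding eta_def by simp
  moreover have "eta r \<le> rlim \<xi> r - rlim l r" using False rl_rx[OF r] unfolding etap_def by simp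
  ultimately show ?thesis unfolding B_def by simp
qed

lemma HA: assumes s: "s \<ge> 0" and h: "x s = u s \<or> rlim x s = rlim u s \<or> etap s < eta s"
  shows "eta s \<le> A s"
proof -
  have c1: "x s = u s \<Longrightarrow> eta s \<le> A s" unfolding A_def eta_def by simp
  have c2: "etap s < eta s \<Longrightarrow> eta s \<le> A s" using c1 etap_lt_eta s by blast
  have c3: "rlim x s = rlim u s \<Longrightarrow> eta s \<le> A s"
  proof -
    assume "rlim x s = rlim u s"
    hence "etap s \<le> A s" unfolding A_def etap_def by simp
    thus "eta s \<le> A s" using c2 by linarith
  qed
  show ?thesis using h c1 c2 c3 by blast
qed

lemma eta_diff: "0 \<le> a \<Longrightarrow> a \<le> b \<Longrightarrow> eta b - eta a = (\<kappa> b - \<kappa> a) - (\<phi>1 b - \<phi>1 a) + (\<phi>2 b - \<phi>2 a)"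
  using eta_eq[of a] eta_eq[of b] by simp

lemma mono_k: "0 \<le> a \<Longrightarrow> a \<le> b \<Longrightarrow> \<kappa> a \<le> \<kappa> b" using km by (auto simp: mono_on_def)
lemma mono_1: "0 \<le> a \<Longrightarrow> a \<le> b \<Longrightarrow> \<phi>1 a \<le> \<phi>1 b" using m1 by (auto simp: mono_on_def)
lemma mono_2: "0 \<le> a \<Longrightarrow> a \<le> b \<Longrightarrow> \<phi>2 a \<le> \<phi>2 b" using m2 by (auto simp: mono_on_def)

lemma core:
  assumes st: "0 \<le> s" "s \<le> t"
    and h1: "\<And>r d. s \<le> r \<Longrightarrow> r \<le> t \<Longrightarrow> d > 0 \<Longrightarrow> g1 r < d \<Longrightarrow> c - d \<le> eta r \<or> c - d \<le> etap r"
    and h2: "\<And>r. s \<le> r \<Longrightarrow> r \<le> t \<Longrightarrow> x r = l r \<Longrightarrow> c \<le> eta r"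
    and h3: "c \<le> eta s \<or> c \<le> etap s"
    and h4: "\<And>r. s \<le> r \<Longrightarrow> r < t \<Longrightarrow> rlim x r = rlim l r \<Longrightarrow> c \<le> etap r"
  shows "c \<le> eta t"
proof (rule ccontr)
  assume "\<not> c \<le> eta t"
  hence ct: "eta t < c" by simp
  define c' where "c' = (eta t + c) / 2"
  have c': "eta t < c'" "c' < c" using ct unfolding c'_def by auto
  define E where "E = {r\<in>{s..t}. eta r < c'}"
  have tE: "t \<in> E" using st c' unfolding E_def by auto
  have bddE: "bdd_below E" unfolding E_def by (rule bdd_belowI[of _ s]) auto
  define \<rho> where "\<rho> = Inf E"
  have \<rho>t: "\<rho> \<le> t" unfolding \<rho>_def by (rule cInf_lower[OF tE bddE])
  have \<rho>s: "s \<le> \<rho>" unfolding \<rho>_def by (rule cInf_greatest) (use tE in \<open>auto simp: E_def\<close>)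
  have before: "\<And>r. s \<le> r \<Longrightarrow> r < \<rho> \<Longrightarrow> c' \<le> eta r"
  proof -
    fix r assume r: "s \<le> r" "r < \<rho>"
    show "c' \<le> eta r"
    proof (rule ccontr)
      assume "\<not> c' \<le> eta r"
      hence "r \<in> E" using r \<rho>t unfolding E_def by auto
      hence "\<rho> \<le> r" unfolding \<rho>_def by (rule cInf_lower[OF _ bddE])
      thus False using r by simp
    qed
  qed
  have noup: "\<And>r. s \<le> r \<Longrightarrow> r \<le> t \<Longrightarrow> eta r < c' \<Longrightarrow> etap r \<le> eta r"
  proof -
    fix r assume r: "s \<le> r" "r \<le> t" "eta r < c'"
    show "etap r \<le> eta r"
    proof (rule ccontr)
      assume "\<not> etap r \<le> eta r"
      hence "x r = l r" using etap_gt_eta[of r] r st by auto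
      hence "c \<le> eta r" using h2 r by auto
      thus False using r c' by simp
    qed
  qed
  show False
  proof (cases "\<rho> \<in> E")
    case True
    hence er: "eta \<rho> < c'" unfolding E_def by auto
    have epr: "etap \<rho> \<le> eta \<rho>" using noup[OF \<rho>s \<rho>t er] .
    show False
    proof (cases "\<rho> = s")
      case True
      thus False using h3 er epr c' by auto
    next
      case False
      hence \<rho>pos: "\<rho> > 0" "s < \<rho>" using \<rho>s st by auto
      have "g1 \<rho> \<le> 0"
      proof (rule ccontr)
        assume "\<not> g1 \<rho> \<le> 0"
        then obtain r where r: "r \<in> {0..<\<rho>}" "\<phi>1 \<rho> - \<phi>1 r < c' - eta \<rho>"
          using LC1[OF \<rho>pos(1), of "c' - eta \<rho>"] er by auto
        define r' where "r' = max r s"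
        have r': "s \<le> r'" "r' < \<rho>" "r \<le> r'" using r \<rho>pos unfolding r'_def by auto
        have "\<phi>1 r \<le> \<phi>1 r'" by (rule mono_1) (use r r' in auto)
        moreover have "eta \<rho> - eta r' = (\<kappa> \<rho> - \<kappa> r') - (\<phi>1 \<rho> - \<phi>1 r') + (\<phi>2 \<rho> - \<phi>2 r')"
          by (rule eta_diff) (use r' st in auto)
        moreover have "\<kappa> r' \<le> \<kappa> \<rho>" "\<phi>2 r' \<le> \<phi>2 \<rho>" using mono_k mono_2 r' st by auto
        moreover have "c' \<le> eta r'" using before r' by auto
        ultimately show False using r by linarith
      qed
      hence "c - (c - c') \<le> eta \<rho> \<or> c - (c - c') \<le> etap \<rho>"
        using h1[OF \<rho>s \<rho>t, of "c - c'"] c' by auto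
      thus False using er epr by auto
    qed
  next
    case False
    have e\<rho>: "c' \<le> eta \<rho>" using False \<rho>s \<rho>t unfolding E_def by auto
    have \<rho>t': "\<rho> < t" using False tE \<rho>t by (cases "\<rho> = t") auto
    have \<rho>0: "\<rho> \<ge> 0" using \<rho>s st by auto
    have near: "\<And>h. h > 0 \<Longrightarrow> \<exists>e\<in>E. \<rho> < e \<and> e < \<rho> + h"
    proof -
      fix h :: real assume h: "h > 0"
      have "Inf E < \<rho> + h" using h \<rho>_def by simp
      then obtain e where e: "e \<in> E" "e < \<rho> + h" using cInf_less_iff[of E] tE bddE by blast
      have "\<rho> \<le> e" unfolding \<rho>_def by (rule cInf_lower[OF e(1) bddE])
      moreover have "e \<noteq> \<rho>" using e False by auto
      ultimately have "\<rho> < e" by simp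
      thus "\<exists>e\<in>E. \<rho> < e \<and> e < \<rho> + h" using e by blast
    qed
    have ep_le: "etap \<rho> \<le> c'"
    proof (rule ccontr)
      assume "\<not> etap \<rho> \<le> c'"
      then obtain d where d: "d > 0" "\<forall>r. \<rho> < r \<and> r < \<rho> + d \<longrightarrow> \<bar>eta r - etap \<rho>\<bar> < etap \<rho> - c'"
        using lim_eps[OF eta_lim[OF \<rho>0], of "etap \<rho> - c'"] by auto
      obtain e where e: "e \<in> E" "\<rho> < e" "e < \<rho> + d" using near[OF d(1)] by auto
      have "eta e < c'" using e unfolding E_def by auto
      thus False using d(2) e by force
    qed
    have J1z: "rlim \<phi>1 \<rho> = \<phi>1 \<rho>"
    proof (rule ccontr)
      assume "rlim \<phi>1 \<rho> \<noteq> \<phi>1 \<rho>"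
      hence "rlim \<phi>1 \<rho> > \<phi>1 \<rho>" using J1_nonneg[OF \<rho>0] by auto
      hence "rlim x \<rho> = rlim l \<rho>" using J1_pos[OF \<rho>0] by auto
      hence "c \<le> etap \<rho>" using h4 \<rho>s \<rho>t' by auto
      thus False using ep_le c' by auto
    qed
    have "etap \<rho> - eta \<rho> \<ge> 0" using jump_eta[OF \<rho>0] J1z J2_nonneg[OF \<rho>0] by simp
    hence eqs: "eta \<rho> = c'" "etap \<rho> = c'" using ep_le e\<rho> by auto
    define \<delta> where "\<delta> = (c - c') / 3"
    have \<delta>: "\<delta> > 0" "c - \<delta> > c' + \<delta>" using c' unfolding \<delta>_def by (simp_all add: field_simps)
    obtain d where d: "d > 0" "\<forall>r. \<rho> < r \<and> r < \<rho> + d \<longrightarrow> \<bar>eta r - etap \<rho>\<bar> < \<delta>"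
      using lim_eps[OF eta_lim[OF \<rho>0] \<delta>(1)] by auto
    obtain e where e: "e \<in> E" "\<rho> < e" "e < \<rho> + d" using near[OF d(1)] by auto
    have ee: "eta e < c'" "e \<le> t" using e unfolding E_def by auto
    have small: "\<And>p. \<rho> \<le> p \<Longrightarrow> p \<le> e \<Longrightarrow> eta p \<le> c' + \<delta> \<and> etap p \<le> c' + \<delta>"
    proof -
      fix p assume p: "\<rho> \<le> p" "p \<le> e"
      show "eta p \<le> c' + \<delta> \<and> etap p \<le> c' + \<delta>"
      proof (cases "p = \<rho>")
        case True thus ?thesis using eqs \<delta> by simp
      next
        case False
        hence p': "\<rho> < p" "p < \<rho> + d" using p e by auto
        have "\<bar>eta p - etap \<rho>\<bar> < \<delta>" using d(2) p' by blast
        hence "eta p \<le> c' + \<delta>" using eqs by linarith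
        moreover have "etap p \<le> c' + \<delta>"
        proof (rule lim_upper[OF eta_lim[of p] p'(2)])
          fix r assume "p < r" "r < \<rho> + d"
          hence "\<rho> < r \<and> r < \<rho> + d" using p' by linarith
          hence "\<bar>eta r - etap \<rho>\<bar> < \<delta>" using d(2) by blast
          thus "eta r \<le> c' + \<delta>" using eqs by linarith
        qed (use p' \<rho>0 in auto)
        ultimately show ?thesis by simp
      qed
    qed
    have "\<phi>1 \<rho> \<noteq> \<phi>1 e"
    proof
      assume eq: "\<phi>1 \<rho> = \<phi>1 e"
      have "eta e - eta \<rho> = (\<kappa> e - \<kappa> \<rho>) - (\<phi>1 e - \<phi>1 \<rho>) + (\<phi>2 e - \<phi>2 \<rho>)"
        by (rule eta_diff) (use \<rho>0 e in auto)
      moreover have "\<kappa> \<rho> \<le> \<kappa> e" "\<phi>2 \<rho> \<le> \<phi>2 e" using mono_k mono_2 \<rho>0 e by auto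
      ultimately show False using eq ee eqs by linarith
    qed
    then obtain p where p: "\<rho> \<le> p" "p \<le> e" "g1 p < \<delta>"
      using NI1[OF \<rho>0, of e \<delta>] \<delta> e by force
    have "c - \<delta> \<le> eta p \<or> c - \<delta> \<le> etap p" using h1[of p \<delta>] p \<rho>s ee \<delta> by auto
    thus False using small[OF p(1,2)] \<delta> by auto
  qed
qed

lemma eta_nonneg: assumes t: "t \<ge> 0" shows "0 \<le> eta t"
proof (rule core[OF order.refl t])
  fix r d :: real assume r: "0 \<le> r" "r \<le> t" "d > 0" "g1 r < d"
  show "0 - d \<le> eta r \<or> 0 - d \<le> etap r"
  proof (cases "x r - l r < d")
    case True
    thus ?thesis using xi_l[OF r(1)] unfolding eta_def by simp
  next
    case False
    hence "rlim x r - rlim l r < d" using r(4) unfolding g1_def by simp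
    thus ?thesis using rl_rxi[OF r(1)] unfolding etap_def by simp
  qed
next
  fix r assume r: "0 \<le> r" "r \<le> t" "x r = l r"
  thus "0 \<le> eta r" using xi_l[OF r(1)] unfolding eta_def by simp
next
  show "0 \<le> eta 0 \<or> 0 \<le> etap 0" using eta0 by simp
next
  fix r assume r: "0 \<le> r" "r < t" "rlim x r = rlim l r"
  thus "0 \<le> etap r" using rl_rxi[OF r(1)] unfolding etap_def by simp
qed

lemma S2:
  assumes st: "0 \<le> s" "s \<le> t" and c: "0 < c" "c < A s" and hB: "\<And>r. s \<le> r \<Longrightarrow> r \<le> t \<Longrightarrow> c < B r"
  shows "c \<le> eta t"
proof -
  have cases: "\<And>r. s \<le> r \<Longrightarrow> r \<le> t \<Longrightarrow> c < \<xi> r - u r \<or> (c < \<xi> r - l r \<and> c < rlim \<xi> r - rlim l r)"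
  proof -
    fix r assume "s \<le> r" "r \<le> t"
    hence "c < B r" by (rule hB)
    thus "c < \<xi> r - u r \<or> (c < \<xi> r - l r \<and> c < rlim \<xi> r - rlim l r)"
      unfolding B_def by (auto simp add: less_max_iff_disj)
  qed
  show ?thesis
  proof (rule core[OF st])
    fix r d :: real assume r: "s \<le> r" "r \<le> t" "d > 0" "g1 r < d"
    have r0: "r \<ge> 0" using r st by auto
    show "c - d \<le> eta r \<or> c - d \<le> etap r"
    proof (cases "c < \<xi> r - u r")
      case True thus ?thesis using x_u[OF r0] r unfolding eta_def by simp
    next
      case False
      hence cc: "c < \<xi> r - l r" "c < rlim \<xi> r - rlim l r" using cases r by auto
      show ?thesis
      proof (cases "x r - l r < d")
        case True thus ?thesis using cc unfolding eta_def by simp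
      next
        case False
        hence "rlim x r - rlim l r < d" using r(4) unfolding g1_def by simp
        thus ?thesis using cc unfolding etap_def by simp
      qed
    qed
  next
    fix r assume r: "s \<le> r" "r \<le> t" "x r = l r"
    have r0: "r \<ge> 0" using r st by auto
    show "c \<le> eta r" using cases[OF r(1,2)] x_u[OF r0] r(3) unfolding eta_def by auto
  next
    have "c < \<xi> s - u s \<or> c < rlim \<xi> s - rlim u s" using c unfolding A_def by auto
    thus "c \<le> eta s \<or> c \<le> etap s" using x_u[OF st(1)] rx_ru[OF st(1)] unfolding eta_def etap_def by auto
  next
    fix r assume r: "s \<le> r" "r < t" "rlim x r = rlim l r"
    have r0: "r \<ge> 0" using r st by auto
    have "((\<lambda>q. \<xi> q - l q) \<longlongrightarrow> rlim \<xi> r - rlim l r) (at_right r)" by (intro tendsto_diff rxi rl r0)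
    hence "c \<le> rlim \<xi> r - rlim l r"
    proof (rule lim_lower[OF _ r(2)])
      fix q assume q: "r < q" "q < t"
      hence "c < B q" using hB r by auto
      moreover have "B q \<le> \<xi> q - l q" using B_le q r0 by auto
      ultimately show "c \<le> \<xi> q - l q" by simp
    qed
    thus "c \<le> etap r" using r(3) unfolding etap_def by simp
  qed
qed

lemma Theta_eq: "Theta u l \<xi> t = (SUP s\<in>{0..t}. min (A s) (INF r\<in>{s..t}. B r))"
  unfolding Theta_def A_def B_def by simp

lemma Theta_le: assumes t: "t \<ge> 0" shows "Theta u l \<xi> t \<le> eta t"
  unfolding Theta_eq
proof (rule cSUP_least)
  show "{0..t} \<noteq> {}" using t by simp
  fix s assume s: "s \<in> {0..t}"
  show "min (A s) (INF r\<in>{s..t}. B r) \<le> eta t"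
  proof (rule ccontr)
    assume "\<not> ?thesis"
    hence lt: "eta t < min (A s) (INF r\<in>{s..t}. B r)" by (simp only: not_le)
    define m where "m = min (A s) (INF r\<in>{s..t}. B r)"
    have m: "m \<le> A s" "m \<le> (INF r\<in>{s..t}. B r)" "eta t < m" using lt unfolding m_def by simp_all
    obtain c where c1: "eta t < c" and cm: "c < m" using dense[OF m(3)] by blast
    have c2: "c < A s" using cm m(1) by (rule less_le_trans)
    have c3: "c < (INF r\<in>{s..t}. B r)" using cm m(2) by (rule less_le_trans)
    note c = c1 c2 c3
    have bdd: "bdd_below (B ` {s..t})"
    proof (rule bdd_belowI[of _ 0])
      fix z assume "z \<in> B ` {s..t}"
      then obtain r where r: "r \<in> {s..t}" "z = B r" by blast
      have "r \<ge> 0" using r s by simp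
      thus "0 \<le> z" using B_nonneg r(2) by simp
    qed
    have "c \<le> eta t"
    proof (rule S2)
      show "0 \<le> s" "s \<le> t" using s by auto
      show "0 < c" using eta_nonneg[OF t] c by simp
      show "c < A s" by (rule c(2))
      fix r assume "s \<le> r" "r \<le> t"
      hence "(INF r\<in>{s..t}. B r) \<le> B r" by (intro cINF_lower[OF bdd]) auto
      thus "c < B r" using c(3) by simp
    qed
    thus False using c(1) by simp
  qed
qed

end




context setting
begin

lemma S3:
  assumes t: "t \<ge> 0" and c: "c > 0" "c \<le> eta t" and \<delta>: "\<delta> > 0" "3 * \<delta> < c"
  shows "\<exists>s\<in>{0..t}. c - 2*\<delta> \<le> A s \<and> (\<forall>r\<in>{s..t}. c - 2*\<delta> \<le> eta r)"
proof -
  define D where "D = {r\<in>{0..t}. eta r < c}"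
  have D0: "0 \<in> D" using eta0 c t unfolding D_def by auto
  have bddD: "bdd_above D" unfolding D_def by (rule bdd_aboveI[of _ t]) auto
  define \<sigma> where "\<sigma> = Sup D"
  have \<sigma>0: "0 \<le> \<sigma>" unfolding \<sigma>_def by (rule cSup_upper[OF D0 bddD])
  have \<sigma>t: "\<sigma> \<le> t" unfolding \<sigma>_def by (rule cSup_least) (use D0 in \<open>auto simp: D_def\<close>)
  have after: "\<And>r. \<sigma> < r \<Longrightarrow> r \<le> t \<Longrightarrow> c \<le> eta r"
  proof -
    fix r assume r: "\<sigma> < r" "r \<le> t"
    show "c \<le> eta r"
    proof (rule ccontr)
      assume "\<not> c \<le> eta r"
      hence "r \<in> D" using r \<sigma>0 unfolding D_def by auto
      hence "r \<le> \<sigma>" unfolding \<sigma>_def by (rule cSup_upper[OF _ bddD])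
      thus False using r by simp
    qed
  qed
  have ep_after: "\<sigma> < t \<Longrightarrow> c \<le> etap \<sigma>"
    by (rule lim_lower[OF eta_lim[OF \<sigma>0]]) (use after in auto)
  show ?thesis
  proof (cases "\<sigma> \<in> D")
    case True
    hence e\<sigma>: "eta \<sigma> < c" unfolding D_def by auto
    have \<sigma>t': "\<sigma> < t" using e\<sigma> c \<sigma>t by (cases "\<sigma> = t") auto
    have ep: "c \<le> etap \<sigma>" using ep_after[OF \<sigma>t'] .
    hence "rlim x \<sigma> = rlim u \<sigma>" using etap_gt_eta[OF \<sigma>0] e\<sigma> by auto
    hence lim: "c \<le> rlim \<xi> \<sigma> - rlim u \<sigma>" using ep unfolding etap_def by simp
    have "((\<lambda>r. \<xi> r - u r) \<longlongrightarrow> rlim \<xi> \<sigma> - rlim u \<sigma>) (at_right \<sigma>)" by (intro tendsto_diff rxi ru \<sigma>0)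
    then obtain d where d: "d > 0" "\<forall>r. \<sigma> < r \<and> r < \<sigma> + d \<longrightarrow> \<bar>(\<xi> r - u r) - (rlim \<xi> \<sigma> - rlim u \<sigma>)\<bar> < \<delta>"
      using lim_eps \<delta>(1) by blast
    define s where "s = min (\<sigma> + d/2) t"
    have s: "\<sigma> < s" "s \<le> t" "s < \<sigma> + d" using d \<sigma>t' unfolding s_def by auto
    have "\<bar>(\<xi> s - u s) - (rlim \<xi> \<sigma> - rlim u \<sigma>)\<bar> < \<delta>" using d(2) s by blast
    hence "c - 2*\<delta> \<le> \<xi> s - u s" using lim \<delta> by linarith
    also have "\<xi> s - u s \<le> A s" unfolding A_def by simp
    finally have "c - 2*\<delta> \<le> A s" .
    moreover have "\<forall>r\<in>{s..t}. c - 2*\<delta> \<le> eta r"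
    proof
      fix r assume r: "r \<in> {s..t}"
      hence "c \<le> eta r" using after[of r] s by auto
      thus "c - 2*\<delta> \<le> eta r" using \<delta> by linarith
    qed
    ultimately show ?thesis using s \<sigma>0 by (intro bexI[of _ s]) auto
  next
    case False
    have e\<sigma>: "c \<le> eta \<sigma>" using False \<sigma>0 \<sigma>t unfolding D_def by auto
    have \<sigma>pos: "\<sigma> > 0" using False D0 \<sigma>0 by (cases "\<sigma> = 0") auto
    have all\<sigma>: "\<forall>r\<in>{\<sigma>..t}. c - 2*\<delta> \<le> eta r"
    proof
      fix r assume r: "r \<in> {\<sigma>..t}"
      show "c - 2*\<delta> \<le> eta r"
      proof (cases "r = \<sigma>")
        case True thus ?thesis using e\<sigma> \<delta> by simp
      next
        case False thus ?thesis using after[of r] r \<delta> by auto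
      qed
    qed
    have near: "\<And>h. h > 0 \<Longrightarrow> \<exists>e\<in>D. \<sigma> - h < e \<and> e < \<sigma>"
    proof -
      fix h :: real assume h: "h > 0"
      have "\<sigma> - h < Sup D" using h \<sigma>_def by simp
      then obtain e where e: "e \<in> D" "\<sigma> - h < e" using less_cSup_iff[of D] D0 bddD by blast
      have "e \<le> \<sigma>" unfolding \<sigma>_def by (rule cSup_upper[OF e(1) bddD])
      moreover have "e \<noteq> \<sigma>" using e False by auto
      ultimately have "e < \<sigma>" by simp
      thus "\<exists>e\<in>D. \<sigma> - h < e \<and> e < \<sigma>" using e by blast
    qed
    show ?thesis
    proof (cases "gk \<sigma> \<le> 0 \<or> g2 \<sigma> \<le> 0")
      case True
      have "eta \<sigma> \<le> A \<sigma>"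
      proof (rule HA[OF \<sigma>0])
        show "x \<sigma> = u \<sigma> \<or> rlim x \<sigma> = rlim u \<sigma> \<or> etap \<sigma> < eta \<sigma>"
        proof (cases "gk \<sigma> \<le> 0")
          case True
          hence "\<xi> \<sigma> - l \<sigma> \<le> 0 \<or> rlim \<xi> \<sigma> - rlim l \<sigma> \<le> 0" unfolding gk_def by linarith
          moreover have "\<xi> \<sigma> - l \<sigma> > 0" using e\<sigma> c x_l[OF \<sigma>0] unfolding eta_def by simp
          ultimately have "rlim \<xi> \<sigma> - rlim l \<sigma> \<le> 0" by simp
          hence "etap \<sigma> \<le> 0" using rl_rx[OF \<sigma>0] unfolding etap_def by simp
          thus ?thesis using e\<sigma> c by simp
        next
          case False
          hence "g2 \<sigma> \<le> 0" using True by simp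
          hence "u \<sigma> - x \<sigma> \<le> 0 \<or> rlim u \<sigma> - rlim x \<sigma> \<le> 0" unfolding g2_def by linarith
          thus ?thesis using x_u[OF \<sigma>0] rx_ru[OF \<sigma>0] by force
        qed
      qed
      hence "c - 2*\<delta> \<le> A \<sigma>" using e\<sigma> \<delta> by simp
      thus ?thesis using all\<sigma> \<sigma>0 \<sigma>t by (intro bexI[of _ \<sigma>]) auto
    next
      case False
      hence gpos: "gk \<sigma> > 0" "g2 \<sigma> > 0" by auto
      obtain r1 where r1: "r1 \<in> {0..<\<sigma>}" "\<kappa> \<sigma> - \<kappa> r1 < \<delta>/2" using LCk[OF \<sigma>pos gpos(1), of "\<delta>/2"] \<delta> by auto
      obtain r2 where r2: "r2 \<in> {0..<\<sigma>}" "\<phi>2 \<sigma> - \<phi>2 r2 < \<delta>/2" using LC2[OF \<sigma>pos gpos(2), of "\<delta>/2"] \<delta> by auto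
      define r' where "r' = max r1 r2"
      have r': "0 \<le> r'" "r' < \<sigma>" "r1 \<le> r'" "r2 \<le> r'" using r1 r2 unfolding r'_def by auto
      have eta_near: "\<And>p. r' \<le> p \<Longrightarrow> p \<le> \<sigma> \<Longrightarrow> c - \<delta> \<le> eta p"
      proof -
        fix p assume p: "r' \<le> p" "p \<le> \<sigma>"
        have "eta \<sigma> - eta p = (\<kappa> \<sigma> - \<kappa> p) - (\<phi>1 \<sigma> - \<phi>1 p) + (\<phi>2 \<sigma> - \<phi>2 p)"
          by (rule eta_diff) (use p r' in auto)
        moreover have "\<kappa> r1 \<le> \<kappa> p" "\<phi>2 r2 \<le> \<phi>2 p" "\<phi>1 p \<le> \<phi>1 \<sigma>"
          using mono_k[of r1 p] mono_2[of r2 p] mono_1[of p \<sigma>] p r' r1 r2 by auto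
        ultimately show "c - \<delta> \<le> eta p" using r1 r2 e\<sigma> by linarith
      qed
      have etap_near: "\<And>p. r' \<le> p \<Longrightarrow> p < \<sigma> \<Longrightarrow> c - \<delta> \<le> etap p"
      proof -
        fix p assume p: "r' \<le> p" "p < \<sigma>"
        show "c - \<delta> \<le> etap p"
          by (rule lim_lower[OF eta_lim p(2)]) (use p r' eta_near in auto)
      qed
      have etap_ok: "\<And>p. r' \<le> p \<Longrightarrow> p \<le> \<sigma> \<Longrightarrow> \<not> (p = \<sigma> \<and> \<sigma> = t) \<Longrightarrow> c - \<delta> \<le> etap p"
      proof -
        fix p assume p: "r' \<le> p" "p \<le> \<sigma>" "\<not> (p = \<sigma> \<and> \<sigma> = t)"
        show "c - \<delta> \<le> etap p"
        proof (cases "p < \<sigma>")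
          case True thus ?thesis using etap_near p by auto
        next
          case False
          hence "p = \<sigma>" "\<sigma> < t" using p \<sigma>t by auto
          thus ?thesis using ep_after \<delta> by force
        qed
      qed
      have allp: "\<And>p. r' \<le> p \<Longrightarrow> p \<le> \<sigma> \<Longrightarrow> \<forall>r\<in>{p..t}. c - 2*\<delta> \<le> eta r"
      proof -
        fix p assume p: "r' \<le> p" "p \<le> \<sigma>"
        show "\<forall>r\<in>{p..t}. c - 2*\<delta> \<le> eta r"
        proof
          fix r assume r: "r \<in> {p..t}"
          show "c - 2*\<delta> \<le> eta r"
          proof (cases "r \<le> \<sigma>")
            case True thus ?thesis using eta_near[of r] r p \<delta> by auto
          next
            case False thus ?thesis using all\<sigma> r by auto
          qed
        qed
      qed
      have at_t: "\<sigma> = t \<Longrightarrow> etap t < eta t \<Longrightarrow> ?thesis"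
      proof -
        assume h: "\<sigma> = t" "etap t < eta t"
        have "eta t \<le> A t" by (rule HA) (use h t in auto)
        hence "c - 2*\<delta> \<le> A t" using c \<delta> by simp
        moreover have "\<forall>r\<in>{t..t}. c - 2*\<delta> \<le> eta r" using c \<delta> by simp
        ultimately show ?thesis using t by (intro bexI[of _ t]) auto
      qed
      obtain e where e: "e \<in> D" "\<sigma> - (\<sigma> - r') < e" "e < \<sigma>" using near[of "\<sigma> - r'"] r' by auto
      have e': "r' < e" "eta e < c" "0 \<le> e" using e r' unfolding D_def by auto
      have "\<kappa> e < \<kappa> \<sigma> \<or> \<phi>2 e < \<phi>2 \<sigma>"
      proof (rule ccontr)
        assume "\<not> ?thesis"
        hence "\<kappa> \<sigma> \<le> \<kappa> e" "\<phi>2 \<sigma> \<le> \<phi>2 e" by auto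
        moreover have "eta \<sigma> - eta e = (\<kappa> \<sigma> - \<kappa> e) - (\<phi>1 \<sigma> - \<phi>1 e) + (\<phi>2 \<sigma> - \<phi>2 e)"
          by (rule eta_diff) (use e e' in auto)
        moreover have "\<phi>1 e \<le> \<phi>1 \<sigma>" using mono_1[of e \<sigma>] e e' by auto
        ultimately show False using e' e\<sigma> by linarith
      qed
      thus ?thesis
      proof
        assume ke: "\<kappa> e < \<kappa> \<sigma>"
        obtain p where p: "e \<le> p" "p \<le> \<sigma>" "gk p < \<delta>"
          using NIk[OF e'(3), of \<sigma> \<delta>] \<delta> e ke by force
        have p': "r' \<le> p" "0 \<le> p" using p e' by auto
        have "eta p \<le> \<xi> p - l p" using x_l[OF p'(2)] unfolding eta_def by simp
        moreover have "etap p \<le> rlim \<xi> p - rlim l p" using rl_rx[OF p'(2)] unfolding etap_def by simp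
        moreover have "\<xi> p - l p < \<delta> \<or> rlim \<xi> p - rlim l p < \<delta>" using p(3) unfolding gk_def by linarith
        ultimately have "eta p < \<delta> \<or> etap p < \<delta>" by linarith
        moreover have "c - \<delta> \<le> eta p" using eta_near p' p by auto
        ultimately have ep: "etap p < \<delta>" using \<delta> by linarith
        show ?thesis
        proof (cases "p = \<sigma> \<and> \<sigma> = t")
          case True
          thus ?thesis using at_t ep c \<delta> by auto
        next
          case False
          thus ?thesis using etap_ok[OF p'(1) p(2)] ep \<delta> by linarith
        qed
      next
        assume pe: "\<phi>2 e < \<phi>2 \<sigma>"
        obtain p where p: "e \<le> p" "p \<le> \<sigma>" "g2 p < \<delta>"
          using NI2[OF e'(3), of \<sigma> \<delta>] \<delta> e pe by force
        have p': "r' \<le> p" "0 \<le> p" "p \<le> t" using p e' \<sigma>t by auto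
        have ep: "c - \<delta> \<le> eta p" using eta_near p' p by auto
        show ?thesis
        proof (cases "u p - x p < \<delta>")
          case True
          have "\<xi> p - u p \<le> A p" unfolding A_def by simp
          hence "c - 2*\<delta> \<le> A p" using True ep unfolding eta_def by linarith
          thus ?thesis using allp[OF p'(1) p(2)] p' by (intro bexI[of _ p]) auto
        next
          case False
          hence ru: "rlim u p - rlim x p < \<delta>" using p(3) unfolding g2_def by linarith
          have Ap: "rlim \<xi> p - rlim u p \<le> A p" unfolding A_def by simp
          show ?thesis
          proof (cases "p = \<sigma> \<and> \<sigma> = t \<and> etap t < eta t")
            case True
            thus ?thesis using at_t by auto
          next
            case False
            have "c - \<delta> \<le> etap p"
            proof (cases "p = \<sigma> \<and> \<sigma> = t")
              case True
              hence "eta t \<le> etap t" using False by auto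
              thus ?thesis using True ep by simp
            next
              case False
              thus ?thesis using etap_ok[OF p'(1) p(2)] by simp
            qed
            hence "c - 2*\<delta> \<le> A p" using ru Ap unfolding etap_def by linarith
            thus ?thesis using allp[OF p'(1) p(2)] p' by (intro bexI[of _ p]) auto
          qed
        qed
      qed
    qed
  qed
qed

lemma Theta_ge: assumes t: "t \<ge> 0" shows "eta t \<le> Theta u l \<xi> t"
proof -
  have bddB: "\<And>s. s \<in> {0..t} \<Longrightarrow> bdd_below (B ` {s..t})"
  proof -
    fix s assume s: "s \<in> {0..t}"
    show "bdd_below (B ` {s..t})"
    proof (rule bdd_belowI[of _ 0])
      fix z assume "z \<in> B ` {s..t}"
      then obtain r where r: "r \<in> {s..t}" "z = B r" by blast
      have "r \<ge> 0" using r s by simp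
      thus "0 \<le> z" using B_nonneg r(2) by simp
    qed
  qed
  have bdd: "bdd_above ((\<lambda>s. min (A s) (INF r\<in>{s..t}. B r)) ` {0..t})"
  proof (rule bdd_aboveI[of _ "B t"])
    fix z assume "z \<in> (\<lambda>s. min (A s) (INF r\<in>{s..t}. B r)) ` {0..t}"
    then obtain s where s: "s \<in> {0..t}" "z = min (A s) (INF r\<in>{s..t}. B r)" by blast
    have "(INF r\<in>{s..t}. B r) \<le> B t" by (rule cINF_lower[OF bddB[OF s(1)]]) (use s in auto)
    thus "z \<le> B t" using s(2) by simp
  qed
  have trm: "\<And>s. s \<in> {0..t} \<Longrightarrow> min (A s) (INF r\<in>{s..t}. B r) \<le> Theta u l \<xi> t"
    unfolding Theta_eq by (rule cSUP_upper[OF _ bdd])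
  show ?thesis
  proof (cases "eta t \<le> 0")
    case True
    have "min (A t) (INF r\<in>{t..t}. B r) \<le> Theta u l \<xi> t" by (rule trm) (use t in auto)
    moreover have "(INF r\<in>{t..t}. B r) = B t" by simp
    moreover have "0 \<le> A t" unfolding A_def by simp
    moreover have "0 \<le> B t" by (rule B_nonneg[OF t])
    ultimately show ?thesis using True by linarith
  next
    case False
    show ?thesis
    proof (rule ccontr)
      assume "\<not> ?thesis"
      hence lt: "Theta u l \<xi> t < eta t" by (simp only: not_le)
      define c where "c = eta t"
      define \<delta> where "\<delta> = min (c / 4) ((c - Theta u l \<xi> t) / 4)"
      have cpos: "c > 0" using False unfolding c_def by simp
      have \<delta>: "\<delta> > 0" "3 * \<delta> < c" "2 * \<delta> < c - Theta u l \<xi> t"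
        using cpos lt unfolding \<delta>_def c_def by (auto simp: min_def)
      obtain s where s: "s \<in> {0..t}" "c - 2*\<delta> \<le> A s" "\<forall>r\<in>{s..t}. c - 2*\<delta> \<le> eta r"
        using S3[OF t cpos _ \<delta>(1,2)] unfolding c_def by auto
      have "c - 2*\<delta> \<le> (INF r\<in>{s..t}. B r)"
      proof (rule cINF_greatest)
        show "{s..t} \<noteq> {}" using s by auto
        fix r assume r: "r \<in> {s..t}"
        have "r \<ge> 0" using r s by auto
        hence "eta r \<le> B r" by (rule B_ge_eta)
        thus "c - 2*\<delta> \<le> B r" using s(3) r by force
      qed
      hence "c - 2*\<delta> \<le> min (A s) (INF r\<in>{s..t}. B r)" using s(2) by simp
      also have "\<dots> \<le> Theta u l \<xi> t" by (rule trm[OF s(1)])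
      finally show False using \<delta>(3) by linarith
    qed
  qed
qed

theorem main: "t \<ge> 0 \<Longrightarrow> x t = \<xi> t - Theta u l \<xi> t"
  using Theta_le[of t] Theta_ge[of t] unfolding eta_def by linarith

end



theorem proposition1:
  fixes l u y \<xi> \<kappa> x k :: "real \<Rightarrow> real"
  assumes "regulated l" and "regulated u"
    and "\<forall>t\<ge>0. l t \<le> u t"
    and "\<forall>t\<ge>0. (INF s\<in>{0..t}. u s - l s) > 0"
    and "regulated y" and "l 0 \<le> y 0" and "y 0 \<le> u 0"
    and "RP1 l y \<xi> \<kappa>"
    and "RP2 l u y x k"
  shows "\<forall>t\<ge>0. x t = \<xi> t - Theta u l \<xi> t"
proof -
  from assms(8) have R1: "(\<forall>t\<ge>0. \<xi> t = y t + \<kappa> t)" "(\<forall>t\<ge>0. \<xi> t \<ge> l t)"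
     "mono_on {0..} \<kappa>" "(\<forall>t\<ge>0. (\<kappa> \<longlongrightarrow> \<kappa> t) (at_right t))" "\<kappa> 0 = 0"
     "(\<integral>\<^sup>+ s\<in>{0..}. ennreal (min (\<xi> s - l s) (rlim \<xi> s - rlim l s)) \<partial>LS \<kappa>) = 0"
    unfolding RP1_def by blast+
  from assms(9) have rx: "regulated x" unfolding RP2_def by blast
  from assms(9) obtain \<phi>1 \<phi>2 where P:
        "(\<forall>t\<ge>0. x t = y t + \<phi>1 t - \<phi>2 t \<and> k t = \<phi>1 t - \<phi>2 t)"
        "(\<forall>t\<ge>0. l t \<le> x t \<and> x t \<le> u t)"
        "mono_on {0..} \<phi>1" "mono_on {0..} \<phi>2" "\<phi>1 0 = 0" "\<phi>2 0 = 0"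
        "(\<integral>\<^sup>+ s\<in>{0..}. ennreal (min (x s - l s) (rlim x s - rlim l s)) \<partial>LS (rpart \<phi>1)) = 0"
        "(\<integral>\<^sup>+ s\<in>{0..}. ennreal (min (u s - x s) (rlim u s - rlim x s)) \<partial>LS (rpart \<phi>2)) = 0"
        "(\<forall>t\<ge>0.
           (\<Sum>\<^sub>\<infinity>s\<in>{0..t}. (rlim x s - rlim l s) * (rlim \<phi>1 s - \<phi>1 s)) = 0 \<and>
           (\<Sum>\<^sub>\<infinity>s\<in>{0..t}. (u s - x s) * (rlim \<phi>1 s - \<phi>1 s)) = 0 \<and>
           (\<Sum>\<^sub>\<infinity>s\<in>{0..t}. (rlim u s - rlim x s) * (rlim \<phi>2 s - \<phi>2 s)) = 0 \<and>
           (\<Sum>\<^sub>\<infinity>s\<in>{0..t}. (x s - l s) * (rlim \<phi>2 s - \<phi>2 s)) = 0)"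
    unfolding RP2_def by blast
  interpret S: setting l u y \<xi> \<kappa> x \<phi>1 \<phi>2
  proof
    show "regulated l" "regulated u" "regulated y" "regulated x" using assms(1,2,5) rx by auto
    show "mono_on {0..} \<kappa>" "\<kappa> 0 = 0" "mono_on {0..} \<phi>1" "mono_on {0..} \<phi>2" "\<phi>1 0 = 0" "\<phi>2 0 = 0"
      using R1 P by auto
    show "(\<integral>\<^sup>+ s\<in>{0..}. ennreal (min (\<xi> s - l s) (rlim \<xi> s - rlim l s)) \<partial>LS \<kappa>) = 0" using R1 by blast
    show "(\<integral>\<^sup>+ s\<in>{0..}. ennreal (min (x s - l s) (rlim x s - rlim l s)) \<partial>LS (rpart \<phi>1)) = 0" using P by blast
    show "(\<integral>\<^sup>+ s\<in>{0..}. ennreal (min (u s - x s) (rlim u s - rlim x s)) \<partial>LS (rpart \<phi>2)) = 0" using P by blast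
    fix t :: real assume t: "0 \<le> t"
    show "\<xi> t = y t + \<kappa> t" "l t \<le> \<xi> t" "(\<kappa> \<longlongrightarrow> \<kappa> t) (at_right t)" using R1 t by auto
    show "x t = y t + \<phi>1 t - \<phi>2 t" "l t \<le> x t" "x t \<le> u t" using P t by auto
    show "(\<Sum>\<^sub>\<infinity>s\<in>{0..t}. (rlim x s - rlim l s) * (rlim \<phi>1 s - \<phi>1 s)) = 0"
      "(\<Sum>\<^sub>\<infinity>s\<in>{0..t}. (u s - x s) * (rlim \<phi>1 s - \<phi>1 s)) = 0"
      "(\<Sum>\<^sub>\<infinity>s\<in>{0..t}. (rlim u s - rlim x s) * (rlim \<phi>2 s - \<phi>2 s)) = 0"
      "(\<Sum>\<^sub>\<infinity>s\<in>{0..t}. (x s - l s) * (rlim \<phi>2 s - \<phi>2 s)) = 0" using P(9) t by auto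
  qed
  show ?thesis using S.main by blast
qed

end
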